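(* The intersection graph of the alternating group $A_{11}$ has diameter $3$.
   Context: For a finite group $G$, the intersection graph $\Delta_G$ is the simple graph whose vertices are the non-trivial proper subgroups of $G$, with an edge between two distinct vertices if and only if the corresponding subgroups intersect non-trivially. *)

theory Defs
  imports "HOL-Algebra.Sym_Groups" "HOL-Library.Extended_Nat"
begin

definition is_path :: "'a set \<Rightarrow> ('a \<Rightarrow> 'a \<Rightarrow> bool) \<Rightarrow> 'a list \<Rightarrow> 'a \<Rightarrow> 'a \<Rightarrow> bool" where
  "is_path V E p u v \<longleftrightarrow> p \<noteq> [] \<and> hd p = u \<and> last p = v \<and> set p \<subseteq> V \<and>
     (\<forall>i. Suc i < length p \<longrightarrow> E (p ! i) (p ! Suc i))"

text \<open>Distance (infinity if no path).\<close>
definition graph_dist :: "'a set \<Rightarrow> ('a \<Rightarrow> 'a \<Rightarrow> bool) \<Rightarrow> 'a \<Rightarrow> 'a \<Rightarrow> enat" where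
  "graph_dist V E u v = (INF p \<in> {p. is_path V E p u v}. enat (length p - 1))"

definition graph_diameter :: "'a set \<Rightarrow> ('a \<Rightarrow> 'a \<Rightarrow> bool) \<Rightarrow> enat" where
  "graph_diameter V E = (SUP (u, v) \<in> V \<times> V. graph_dist V E u v)"

definition intersection_graph_vertices :: "('a, 'b) monoid_scheme \<Rightarrow> 'a set set" where
  "intersection_graph_vertices G =
     {H. subgroup H G \<and> H \<noteq> {\<one>\<^bsub>G\<^esub>} \<and> H \<noteq> carrier G}"

definition intersection_graph_adj :: "('a, 'b) monoid_scheme \<Rightarrow> 'a set \<Rightarrow> 'a set \<Rightarrow> bool" where
  "intersection_graph_adj G H K \<longleftrightarrow> H \<noteq> K \<and> H \<inter> K \<noteq> {\<one>\<^bsub>G\<^esub>}"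

end

theory Submission
  imports Defs
begin


abbreviation GG where "GG \<equiv> alt_group 11"

lemma evenperm_cycle: "cycle cs \<Longrightarrow> evenperm (cycle_of_list cs) = even (length cs - 1)"
  by (rule evenperm_unique[OF swapidseq_ext_imp_swapidseq[OF swapidseq_ext_of_cycles]]) auto

lemma cycle_in_carrier:
  assumes "cycle cs" "set cs \<subseteq> {1..n}" "odd (length cs)"
  shows "cycle_of_list cs \<in> carrier (alt_group n)"
proof -
  have "cycle_of_list cs permutes {1..n}" using permutes_subset[OF cycle_permutes assms(2)] .
  moreover have "evenperm (cycle_of_list cs)" using evenperm_cycle[OF assms(1)] assms(3)
    by (cases cs) auto
  ultimately show ?thesis unfolding alt_group_carrier by simp
qed

definition cc :: "nat \<Rightarrow> nat" where "cc = cycle_of_list [1,2,3,4,5,6,7,8,9,10,11]"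
definition bb :: "nat \<Rightarrow> nat" where "bb = cycle_of_list [3,7,11,8] \<circ> cycle_of_list [4,10,5,6]"
definition dd :: "nat \<Rightarrow> nat" where "dd = cycle_of_list [1,2,3]"

lemma cc_carrier: "cc \<in> carrier GG"
  unfolding cc_def by (rule cycle_in_carrier) auto
lemma dd_carrier: "dd \<in> carrier GG"
  unfolding dd_def by (rule cycle_in_carrier) auto
lemma bb_carrier: "bb \<in> carrier GG"
proof -
  have p1: "cycle_of_list [3,7,11,8::nat] permutes {1..11}"
    by (rule permutes_subset[OF cycle_permutes]) auto
  have p2: "cycle_of_list [4,10,5,6::nat] permutes {1..11}"
    by (rule permutes_subset[OF cycle_permutes]) auto
  have e1: "\<not> evenperm (cycle_of_list [3,7,11,8::nat])" by (subst evenperm_cycle) auto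
  have e2: "\<not> evenperm (cycle_of_list [4,10,5,6::nat])" by (subst evenperm_cycle) auto
  have "evenperm bb" unfolding bb_def
    by (subst evenperm_comp) (use e1 e2 p1 p2 permutation_permutes in auto)
  moreover have "bb permutes {1..11}" unfolding bb_def by (rule permutes_compose[OF p2 p1])
  ultimately show ?thesis unfolding alt_group_carrier by simp
qed

lemma cc_vals[simp]: "cc 1 = 2" "cc 2 = 3" "cc 3 = 4" "cc 4 = 5" "cc 5 = 6" "cc 6 = 7" "cc 7 = 8" "cc 8 = 9" "cc 9 = 10" "cc 10 = 11" "cc 11 = 1"
  by (simp_all add: cc_def transpose_def)

lemma bb_vals[simp]: "bb 1 = 1" "bb 2 = 2" "bb 3 = 7" "bb 4 = 10" "bb 5 = 6" "bb 6 = 4" "bb 7 = 11" "bb 8 = 3" "bb 9 = 9" "bb 10 = 5" "bb 11 = 8"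
  by (simp_all add: bb_def transpose_def)

lemma dd_vals[simp]: "dd 1 = 2" "dd 2 = 3" "dd 3 = 1" "dd 4 = 4" "dd 5 = 5" "dd 6 = 6" "dd 7 = 7" "dd 8 = 8" "dd 9 = 9" "dd 10 = 10" "dd 11 = 11"
  by (simp_all add: dd_def transpose_def)


lemma dist_le_path: "is_path V E p u v \<Longrightarrow> graph_dist V E u v \<le> enat (length p - 1)"
  unfolding graph_dist_def by (rule INF_lower) auto

lemma path_single: "u \<in> V \<Longrightarrow> is_path V E [u] u u"
  unfolding is_path_def by auto

lemma path_extend:
  assumes "is_path V E p u v" "w \<in> V" "v = w \<or> E v w"
  shows "\<exists>p'. is_path V E p' u w \<and> length p' \<le> length p + 1"
proof (cases "v = w")
  case True then show ?thesis using assms by auto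
next
  case False
  hence E: "E v w" using assms by auto
  have "is_path V E (p @ [w]) u w"
    unfolding is_path_def
  proof (intro conjI allI impI)
    show "p @ [w] \<noteq> []" by simp
    show "hd (p @ [w]) = u" using assms(1) unfolding is_path_def by auto
    show "last (p @ [w]) = w" by simp
    show "set (p @ [w]) \<subseteq> V" using assms(1,2) unfolding is_path_def by auto
    fix i assume i: "Suc i < length (p @ [w])"
    show "E ((p @ [w]) ! i) ((p @ [w]) ! Suc i)"
    proof (cases "Suc i < length p")
      case True then show ?thesis using assms(1) unfolding is_path_def by (auto simp: nth_append)
    next
      case False
      hence si: "Suc i = length p" using i by auto
      have lv: "p ! (length p - 1) = v" using assms(1) unfolding is_path_def
        by (metis last_conv_nth)
      have ip: "i = length p - 1" using si by simp
      have "i < length p" using si by simp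
      hence "(p @ [w]) ! i = p ! i" by (simp add: nth_append)
      also have "\<dots> = v" using lv ip by simp
      finally have 1: "(p @ [w]) ! i = v" .
      have 2: "(p @ [w]) ! Suc i = w" using si by (simp add: nth_append)
      show ?thesis using E 1 2 by simp
    qed
  qed
  then show ?thesis by fastforce
qed

lemma walk3:
  assumes "H \<in> V" "L1 \<in> V" "L2 \<in> V" "K \<in> V"
    "H = L1 \<or> E H L1" "L1 = L2 \<or> E L1 L2" "L2 = K \<or> E L2 K"
  shows "graph_dist V E H K \<le> 3"
proof -
  obtain p1 where p1: "is_path V E p1 H L1" "length p1 \<le> 2"
    using path_extend[of V E "[H]" H H L1] path_single[OF assms(1)] assms(2,5) by auto
  obtain p2 where p2: "is_path V E p2 H L2" "length p2 \<le> 3"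
    using path_extend[of V E p1 H L1 L2] p1 assms(3,6) by fastforce
  obtain p3 where p3: "is_path V E p3 H K" "length p3 \<le> 4"
    using path_extend[of V E p2 H L2 K] p2 assms(4,7) by fastforce
  have "graph_dist V E H K \<le> enat (length p3 - 1)" by (rule dist_le_path[OF p3(1)])
  also have "\<dots> \<le> 3" using p3(2) by (simp add: numeral_eq_enat)
  finally show ?thesis .
qed

lemma dist_ge3:
  assumes "u \<noteq> v" "\<not> E u v" "\<And>L. L \<in> V \<Longrightarrow> E u L \<Longrightarrow> E L v \<Longrightarrow> False"
  shows "3 \<le> graph_dist V E u v"
  unfolding graph_dist_def
proof (rule INF_greatest)
  fix p assume "p \<in> {p. is_path V E p u v}"
  hence P: "is_path V E p u v" by simp
  have "\<not> length p \<le> 3"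
  proof
    assume l: "length p \<le> 3"
    have ne: "p \<noteq> []" using P unfolding is_path_def by auto
    have "length p = 1 \<or> length p = 2 \<or> length p = 3" proof -
      have "length p \<noteq> 0" using ne by simp
      then show ?thesis using l by linarith
    qed
    then show False
    proof (elim disjE)
      assume "length p = 1"
      then obtain x where "p = [x]" by (cases p) auto
      then show False using P assms(1) unfolding is_path_def by auto
    next
      assume "length p = 2"
      then obtain x y where "p = [x,y]" by (cases p; cases "tl p") auto
      then show False using P assms(2) unfolding is_path_def by (auto dest: spec[of _ 0])
    next
      assume "length p = 3"
      then obtain x y z where pp: "p = [x,y,z]" by (cases p; cases "tl p"; cases "tl (tl p)") auto
      have "E x y" "E y z" using P unfolding is_path_def pp
        by (auto dest: spec[of _ 0] spec[of _ 1])
      moreover have "y \<in> V" using P unfolding is_path_def pp by auto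
      ultimately show False using P assms(3) unfolding is_path_def pp by auto
    qed
  qed
  then show "3 \<le> enat (length p - 1)" by (simp add: numeral_eq_enat)
qed

lemma diameter3:
  assumes "\<And>u v. u \<in> V \<Longrightarrow> v \<in> V \<Longrightarrow> graph_dist V E u v \<le> 3"
    "u0 \<in> V" "v0 \<in> V" "3 \<le> graph_dist V E u0 v0"
  shows "graph_diameter V E = 3"
  unfolding graph_diameter_def
proof (rule antisym)
  show "(SUP (u, v)\<in>V \<times> V. graph_dist V E u v) \<le> 3"
    by (rule SUP_least) (use assms(1) in auto)
  have "graph_dist V E u0 v0 \<le> (SUP (u, v)\<in>V \<times> V. graph_dist V E u v)"
    using SUP_upper[of "(u0,v0)" "V \<times> V" "\<lambda>(u, v). graph_dist V E u v"] assms(2,3) by auto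
  then show "3 \<le> (SUP (u, v)\<in>V \<times> V. graph_dist V E u v)" using assms(4) by auto
qed


lemma GG_group: "group GG" by (rule alt_group_is_group)

lemma GG_mult: "x \<otimes>\<^bsub>GG\<^esub> y = x \<circ> y" by (simp add: alt_group_mult)
lemma GG_one: "\<one>\<^bsub>GG\<^esub> = id" by (simp add: alt_group_one)

lemma GG_pow: "x [^]\<^bsub>GG\<^esub> (n::nat) = x ^^ n"
  by (induction n) (simp_all add: funpow_Suc_right GG_mult GG_one del: funpow.simps)

lemma GG_comp_closed: "x \<in> carrier GG \<Longrightarrow> y \<in> carrier GG \<Longrightarrow> x \<circ> y \<in> carrier GG"
  using monoid.m_closed[OF group.is_monoid[OF GG_group]] by (simp add: GG_mult)
lemma GG_id: "id \<in> carrier GG"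
  using monoid.one_closed[OF group.is_monoid[OF GG_group]] by (simp add: GG_one)

lemma GG_inv: "x \<in> carrier GG \<Longrightarrow> inv\<^bsub>GG\<^esub> x = inv' x"
  by (rule alt_group_inv_equality)

lemma GG_bij: "x \<in> carrier GG \<Longrightarrow> bij x"
  unfolding alt_group_carrier using permutes_bij by blast

lemma GG_perm: "x \<in> carrier GG \<Longrightarrow> x permutes {1..11}"
  unfolding alt_group_carrier by blast

lemma GG_card: "card (carrier GG) = 19958400"
proof -
  have "card (carrier GG) = fact 11 div 2"
    using alt_group_card_carrier[of 11] by simp
  also have "\<dots> = 19958400" by (simp add: fact_numeral)
  finally show ?thesis .
qed

lemma GG_finite: "finite (carrier GG)"
proof -
  have "carrier GG \<subseteq> {p. p permutes {1..11::nat}}" using GG_perm by blast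
  moreover have "finite {p. p permutes {1..11::nat}}" by (rule finite_permutations) simp
  ultimately show ?thesis by (rule finite_subset)
qed

lemma card_mult_le:
  assumes "subgroup A GG" "subgroup B GG" "A \<inter> B = {id}"
  shows "card A * card B \<le> card (carrier GG)"
proof -
  interpret group GG by (rule GG_group)
  have inj: "inj_on (\<lambda>(a,b). a \<otimes>\<^bsub>GG\<^esub> b) (A \<times> B)"
  proof (rule inj_onI, clarify)
    fix a b a' b' assume ab: "a \<in> A" "b \<in> B" "a' \<in> A" "b' \<in> B"
      and eq: "a \<otimes>\<^bsub>GG\<^esub> b = a' \<otimes>\<^bsub>GG\<^esub> b'"
    have c: "a \<in> carrier GG" "b \<in> carrier GG" "a' \<in> carrier GG" "b' \<in> carrier GG"
      using ab assms(1,2) subgroup.subset by blast+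
    have "inv\<^bsub>GG\<^esub> a' \<otimes>\<^bsub>GG\<^esub> a = b' \<otimes>\<^bsub>GG\<^esub> inv\<^bsub>GG\<^esub> b"
      using eq c by (metis inv_solve_left' inv_solve_right m_assoc m_closed inv_closed)
    moreover have "inv\<^bsub>GG\<^esub> a' \<otimes>\<^bsub>GG\<^esub> a \<in> A"
      using ab assms(1) by (simp add: subgroup.m_closed subgroup.m_inv_closed)
    moreover have "b' \<otimes>\<^bsub>GG\<^esub> inv\<^bsub>GG\<^esub> b \<in> B"
      using ab assms(2) by (simp add: subgroup.m_closed subgroup.m_inv_closed)
    ultimately have "inv\<^bsub>GG\<^esub> a' \<otimes>\<^bsub>GG\<^esub> a = \<one>\<^bsub>GG\<^esub>" "b' \<otimes>\<^bsub>GG\<^esub> inv\<^bsub>GG\<^esub> b = \<one>\<^bsub>GG\<^esub>"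
      using assms(3) by (auto simp: GG_one)
    then show "a = a' \<and> b = b'" using c
      by (metis inv_closed inv_inv inv_equality r_inv l_inv)
  qed
  have "(\<lambda>(a,b). a \<otimes>\<^bsub>GG\<^esub> b) ` (A \<times> B) \<subseteq> carrier GG"
    using assms(1,2) subgroup.subset by fastforce
  hence "card (A \<times> B) \<le> card (carrier GG)"
    using card_inj_on_le[OF inj _ GG_finite] by blast
  then show ?thesis by (simp add: card_cartesian_product)
qed

lemma nontriv_inter:
  assumes "subgroup A GG" "subgroup B GG" "card A * card B > 19958400"
  shows "A \<inter> B \<noteq> {id}"
  using card_mult_le[OF assms(1,2)] assms(3) GG_card by auto

definition Sfix :: "nat \<Rightarrow> (nat \<Rightarrow> nat) set" where
  "Sfix a = {g \<in> carrier GG. g a = a}"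

lemma Sfix_subgroup: "subgroup (Sfix a) GG"
proof
  show "Sfix a \<subseteq> carrier GG" unfolding Sfix_def by auto
  show "x \<otimes>\<^bsub>GG\<^esub> y \<in> Sfix a" if "x \<in> Sfix a" "y \<in> Sfix a" for x y
    using that unfolding Sfix_def by (auto simp: GG_mult GG_comp_closed)
  show "\<one>\<^bsub>GG\<^esub> \<in> Sfix a" unfolding Sfix_def using GG_id by (simp add: GG_one)
  show "inv\<^bsub>GG\<^esub> x \<in> Sfix a" if "x \<in> Sfix a" for x
  proof -
    have "x \<in> carrier GG" "x a = a" using that unfolding Sfix_def by auto
    moreover have "inv' x a = a" using permutes_inv_eq[OF GG_perm[OF \<open>x \<in> carrier GG\<close>]] \<open>x a = a\<close> by blast
    ultimately show ?thesis unfolding Sfix_def using GG_inv alt_group_inv_closed by auto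
  qed
qed


lemma sucvals[simp]: "cc (Suc 0) = 2" "bb (Suc 0) = 1" "dd (Suc 0) = 2" by (simp_all flip: One_nat_def)


definition BL :: "nat list list" where "BL = [[1,2,3,4,10], [1,2,3,5,8], [1,2,3,6,7], [1,2,3,9,11], [1,2,4,5,9], [1,2,4,6,8], [1,2,4,7,11], [1,2,5,6,11], [1,2,5,7,10], [1,2,6,9,10], [1,2,7,8,9], [1,2,8,10,11], [1,3,4,5,6], [1,3,4,7,9], [1,3,4,8,11], [1,3,5,7,11], [1,3,5,9,10], [1,3,6,8,9], [1,3,6,10,11], [1,3,7,8,10], [1,4,5,7,8], [1,4,5,10,11], [1,4,6,7,10], [1,4,6,9,11], [1,4,8,9,10], [1,5,6,7,9], [1,5,6,8,10], [1,5,8,9,11], [1,6,7,8,11], [1,7,9,10,11], [2,3,4,5,11], [2,3,4,6,9], [2,3,4,7,8], [2,3,5,6,10], [2,3,5,7,9], [2,3,6,8,11], [2,3,7,10,11], [2,3,8,9,10], [2,4,5,6,7], [2,4,5,8,10], [2,4,6,10,11], [2,4,7,9,10], [2,4,8,9,11], [2,5,6,8,9], [2,5,7,8,11], [2,5,9,10,11], [2,6,7,8,10], [2,6,7,9,11], [3,4,5,7,10], [3,4,5,8,9], [3,4,6,7,11], [3,4,6,8,10], [3,4,9,10,11], [3,5,6,7,8], [3,5,6,9,11], [3,5,8,10,11], [3,6,7,9,10], [3,7,8,9,11], [4,5,6,8,11], [4,5,6,9,10], [4,5,7,9,11], [4,6,7,8,9], [4,7,8,10,11], [5,6,7,10,11],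 [5,7,8,9,10], [6,8,9,10,11]]"

definition Blocks :: "nat set set" where "Blocks = set (map set BL)"

definition MM :: "(nat \<Rightarrow> nat) set" where
  "MM = {g \<in> carrier GG. \<forall>B\<in>Blocks. g ` B \<in> Blocks}"

lemma BL_sorted: "\<forall>l\<in>set BL. sorted l \<and> distinct l"
  by (simp add: BL_def)

lemma block_check:
  assumes "\<forall>l\<in>set BL. sort (map f l) \<in> set BL"
  shows "\<forall>B\<in>Blocks. f ` B \<in> Blocks"
proof
  fix B assume "B \<in> Blocks"
  then obtain l where l: "l \<in> set BL" "B = set l" unfolding Blocks_def by auto
  have "f ` B = set (sort (map f l))" using l by simp
  moreover have "sort (map f l) \<in> set BL" using assms l by blast
  hence "set (sort (map f l)) \<in> set ` set BL" by (rule imageI)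
  ultimately show "f ` B \<in> Blocks" unfolding Blocks_def by (metis list.set_map)
qed

lemma cc_img: "map (\<lambda>l. sort (map cc l)) BL = [[2,3,4,5,11], [2,3,4,6,9], [2,3,4,7,8], [1,2,3,4,10], [2,3,5,6,10], [2,3,5,7,9], [1,2,3,5,8], [1,2,3,6,7], [2,3,6,8,11], [2,3,7,10,11], [2,3,8,9,10], [1,2,3,9,11], [2,4,5,6,7], [2,4,5,8,10], [1,2,4,5,9], [1,2,4,6,8], [2,4,6,10,11], [2,4,7,9,10], [1,2,4,7,11], [2,4,8,9,11], [2,5,6,8,9], [1,2,5,6,11], [2,5,7,8,11], [1,2,5,7,10], [2,5,9,10,11], [2,6,7,8,10], [2,6,7,9,11], [1,2,6,9,10], [1,2,7,8,9], [1,2,8,10,11], [1,3,4,5,6], [3,4,5,7,10], [3,4,5,8,9], [3,4,6,7,11], [3,4,6,8,10], [1,3,4,7,9], [1,3,4,8,11], [3,4,9,10,11], [3,5,6,7,8], [3,5,6,9,11], [1,3,5,7,11], [3,5,8,10,11], [1,3,5,9,10], [3,6,7,9,10], [1,3,6,8,9], [1,3,6,10,11], [3,7,8,9,11], [1,3,7,8,10], [4,5,6,8,11], [4,5,6,9,10], [1,4,5,7,8], [4,5,7,9,11], [1,4,5,10,11], [4,6,7,8,9], [1,4,6,7,10], [1,4,6,9,11], [4,7,8,10,11], [1,4,8,9,10], [1,5,6,7,9], [5,6,7,10,11], [1,5,6,8,10], [5,7,8,9,10], [1,5,8,9,11], [1,6,7,8,11], [6,8,9,10,11], [1,7,9,1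0,11]]"
  by (simp add: BL_def)
lemma cc_img_sub: "set [[2,3,4,5,11], [2,3,4,6,9], [2,3,4,7,8], [1,2,3,4,10], [2,3,5,6,10], [2,3,5,7,9], [1,2,3,5,8], [1,2,3,6,7], [2,3,6,8,11], [2,3,7,10,11], [2,3,8,9,10], [1,2,3,9,11], [2,4,5,6,7], [2,4,5,8,10], [1,2,4,5,9], [1,2,4,6,8], [2,4,6,10,11], [2,4,7,9,10], [1,2,4,7,11], [2,4,8,9,11], [2,5,6,8,9], [1,2,5,6,11], [2,5,7,8,11], [1,2,5,7,10], [2,5,9,10,11], [2,6,7,8,10], [2,6,7,9,11], [1,2,6,9,10], [1,2,7,8,9], [1,2,8,10,11], [1,3,4,5,6], [3,4,5,7,10], [3,4,5,8,9], [3,4,6,7,11], [3,4,6,8,10], [1,3,4,7,9], [1,3,4,8,11], [3,4,9,10,11], [3,5,6,7,8], [3,5,6,9,11], [1,3,5,7,11], [3,5,8,10,11], [1,3,5,9,10], [3,6,7,9,10], [1,3,6,8,9], [1,3,6,10,11], [3,7,8,9,11], [1,3,7,8,10], [4,5,6,8,11], [4,5,6,9,10], [1,4,5,7,8], [4,5,7,9,11], [1,4,5,10,11], [4,6,7,8,9], [1,4,6,7,10], [1,4,6,9,11], [4,7,8,10,11], [1,4,8,9,10], [1,5,6,7,9], [5,6,7,10,11], [1,5,6,8,10], [5,7,8,9,10], [1,5,8,9,11], [1,6,7,8,11], [6,8,9,10,11], [1,7,9,10,11]] \<subseteq> set BL"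
  by (simp add: BL_def)
lemma cc_blocks: "\<forall>l\<in>set BL. sort (map cc l) \<in> set BL"
  using cc_img cc_img_sub by (metis (no_types, lifting) imageI list.set_map subset_iff)
lemma bb_img: "map (\<lambda>l. sort (map bb l)) BL = [[1,2,5,7,10], [1,2,3,6,7], [1,2,4,7,11], [1,2,7,8,9], [1,2,6,9,10], [1,2,3,4,10], [1,2,8,10,11], [1,2,4,6,8], [1,2,5,6,11], [1,2,4,5,9], [1,2,3,9,11], [1,2,3,5,8], [1,4,6,7,10], [1,7,9,10,11], [1,3,7,8,10], [1,6,7,8,11], [1,5,6,7,9], [1,3,4,7,9], [1,4,5,7,8], [1,3,5,7,11], [1,3,6,10,11], [1,5,6,8,10], [1,4,5,10,11], [1,4,8,9,10], [1,3,5,9,10], [1,4,6,9,11], [1,3,4,5,6], [1,3,6,8,9], [1,3,4,8,11], [1,5,8,9,11], [2,6,7,8,10], [2,4,7,9,10], [2,3,7,10,11], [2,4,5,6,7], [2,6,7,9,11], [2,3,4,7,8], [2,5,7,8,11], [2,3,5,7,9], [2,4,6,10,11], [2,3,5,6,10], [2,4,5,8,10], [2,5,9,10,11], [2,3,8,9,10], [2,3,4,6,9], [2,3,6,8,11], [2,5,6,8,9], [2,3,4,5,11], [2,4,8,9,11], [5,6,7,10,11], [3,6,7,9,10], [4,7,8,10,11], [3,4,5,7,10], [5,7,8,9,10], [3,4,6,7,11], [4,6,7,8,9], [3,5,6,7,8], [4,5,7,9,11], [3,7,8,9,11], [3,4,6,8,10], [4,5,6,9,10], [6,8,9,10,11],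 [3,4,9,10,11], [3,5,8,10,11], [4,5,6,8,11], [3,5,6,9,11], [3,4,5,8,9]]"
  by (simp add: BL_def)
lemma bb_img_sub: "set [[1,2,5,7,10], [1,2,3,6,7], [1,2,4,7,11], [1,2,7,8,9], [1,2,6,9,10], [1,2,3,4,10], [1,2,8,10,11], [1,2,4,6,8], [1,2,5,6,11], [1,2,4,5,9], [1,2,3,9,11], [1,2,3,5,8], [1,4,6,7,10], [1,7,9,10,11], [1,3,7,8,10], [1,6,7,8,11], [1,5,6,7,9], [1,3,4,7,9], [1,4,5,7,8], [1,3,5,7,11], [1,3,6,10,11], [1,5,6,8,10], [1,4,5,10,11], [1,4,8,9,10], [1,3,5,9,10], [1,4,6,9,11], [1,3,4,5,6], [1,3,6,8,9], [1,3,4,8,11], [1,5,8,9,11], [2,6,7,8,10], [2,4,7,9,10], [2,3,7,10,11], [2,4,5,6,7], [2,6,7,9,11], [2,3,4,7,8], [2,5,7,8,11], [2,3,5,7,9], [2,4,6,10,11], [2,3,5,6,10], [2,4,5,8,10], [2,5,9,10,11], [2,3,8,9,10], [2,3,4,6,9], [2,3,6,8,11], [2,5,6,8,9], [2,3,4,5,11], [2,4,8,9,11], [5,6,7,10,11], [3,6,7,9,10], [4,7,8,10,11], [3,4,5,7,10], [5,7,8,9,10], [3,4,6,7,11], [4,6,7,8,9], [3,5,6,7,8], [4,5,7,9,11], [3,7,8,9,11], [3,4,6,8,10], [4,5,6,9,10], [6,8,9,10,11], [3,4,9,10,11], [3,5,8,10,11], [4,5,6,8,11], [3,5,6,9,11],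 [3,4,5,8,9]] \<subseteq> set BL"
  by (simp add: BL_def)
lemma bb_blocks: "\<forall>l\<in>set BL. sort (map bb l) \<in> set BL"
  using bb_img bb_img_sub by (metis (no_types, lifting) imageI list.set_map subset_iff)

lemma cc_MM: "cc \<in> MM" unfolding MM_def using cc_carrier block_check[OF cc_blocks] by simp
lemma bb_MM: "bb \<in> MM" unfolding MM_def using bb_carrier block_check[OF bb_blocks] by simp

lemma MM_comp: "g \<in> MM \<Longrightarrow> h \<in> MM \<Longrightarrow> g \<circ> h \<in> MM"
proof -
  assume g: "g \<in> MM" and h: "h \<in> MM"
  have "(g \<circ> h) ` B \<in> Blocks" if "B \<in> Blocks" for B
  proof -
    have "h ` B \<in> Blocks" using h that unfolding MM_def by auto
    hence "g ` (h ` B) \<in> Blocks" using g unfolding MM_def by auto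
    then show ?thesis by (simp add: image_comp)
  qed
  then show ?thesis using g h GG_comp_closed unfolding MM_def by auto
qed

lemma MM_id: "id \<in> MM" unfolding MM_def using GG_id by simp

lemma finite_Blocks: "finite Blocks" unfolding Blocks_def by simp

lemma MM_inv: assumes "g \<in> MM" shows "inv' g \<in> MM"
proof -
  have g: "g \<in> carrier GG" "\<forall>B\<in>Blocks. g ` B \<in> Blocks" using assms unfolding MM_def by auto
  have inj: "inj g" using GG_bij[OF g(1)] bij_is_inj by blast
  have "(\<lambda>B. g ` B) ` Blocks = Blocks"
  proof (rule endo_inj_surj[OF finite_Blocks])
    show "(`) g ` Blocks \<subseteq> Blocks" using g(2) by auto
    show "inj_on ((`) g) Blocks" using inj by (auto simp: inj_on_def inj_image_eq_iff)
  qed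
  have "inv' g ` B \<in> Blocks" if "B \<in> Blocks" for B
  proof -
    have "B \<in> (\<lambda>B. g ` B) ` Blocks" using \<open>B \<in> Blocks\<close> \<open>(\<lambda>B. g ` B) ` Blocks = Blocks\<close> by simp
    then obtain B' where "B' \<in> Blocks" "B = g ` B'" by (rule imageE) simp
    moreover have "inv' g ` (g ` B') = B'" using inj by (simp add: image_inv_f_f)
    ultimately show ?thesis by simp
  qed
  then show ?thesis unfolding MM_def using alt_group_inv_closed[OF g(1)] by blast
qed

lemma MM_subgroup: "subgroup MM GG"
proof
  show "MM \<subseteq> carrier GG" unfolding MM_def by auto
  show "x \<otimes>\<^bsub>GG\<^esub> y \<in> MM" if "x \<in> MM" "y \<in> MM" for x y
    using MM_comp[OF that] by (simp add: GG_mult)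
  show "\<one>\<^bsub>GG\<^esub> \<in> MM" using MM_id by (simp add: GG_one)
  show "inv\<^bsub>GG\<^esub> x \<in> MM" if "x \<in> MM" for x
  proof -
    have "x \<in> carrier GG" using that unfolding MM_def by blast
    then show ?thesis using MM_inv[OF that] GG_inv by simp
  qed
qed

lemma three_cycle_not_MM: "cycle_of_list [1,2,5] \<notin> MM"
proof
  assume a: "cycle_of_list [1,2,5] \<in> MM"
  have "[1,2,3,4,10] \<in> set BL" by (simp add: BL_def)
  hence "set [1,2,3,4,10::nat] \<in> Blocks" unfolding Blocks_def by (metis imageI list.set_map)
  hence "cycle_of_list [1,2,5] ` set [1,2,3,4,10::nat] \<in> Blocks" using a unfolding MM_def by blast
  moreover have "cycle_of_list [1,2,5] ` set [1,2,3,4,10::nat] = set [2,3,4,5,10]"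
    by (auto simp: transpose_def)
  ultimately have "set [2,3,4,5,10::nat] \<in> set (map set BL)" unfolding Blocks_def by simp
  then obtain l where l: "l \<in> set BL" "set l = set [2,3,4,5,10::nat]" by auto
  have "l = [2,3,4,5,10]" using l BL_sorted
    by (intro sorted_distinct_set_unique) auto
  moreover have "[2,3,4,5,10] \<notin> set BL" by (simp add: BL_def)
  ultimately show False using l(1) by simp
qed

lemma MM_proper: "MM \<noteq> carrier GG"
  using three_cycle_not_MM cycle_in_carrier[of "[1,2,5]" 11] by auto

lemmas MM_words = MM_comp cc_MM bb_MM MM_id

lemma lev0_1: "\<exists>g\<in>MM. g 1 = 1"
  by (rule bexI[of _ "id"]) (simp_all add: MM_words)

lemma lev0_2: "\<exists>g\<in>MM. g 1 = 2"
  by (rule bexI[of _ "(cc)"]) (simp_all add: MM_words)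

lemma lev0_3: "\<exists>g\<in>MM. g 1 = 3"
  by (rule bexI[of _ "(cc \<circ> cc)"]) (simp_all add: MM_words)

lemma lev0_4: "\<exists>g\<in>MM. g 1 = 4"
  by (rule bexI[of _ "(cc \<circ> cc \<circ> cc)"]) (simp_all add: MM_words)

lemma lev0_5: "\<exists>g\<in>MM. g 1 = 5"
  by (rule bexI[of _ "(cc \<circ> cc \<circ> cc \<circ> cc)"]) (simp_all add: MM_words)

lemma lev0_6: "\<exists>g\<in>MM. g 1 = 6"
  by (rule bexI[of _ "(cc \<circ> cc \<circ> cc \<circ> cc \<circ> cc)"]) (simp_all add: MM_words)

lemma lev0_7: "\<exists>g\<in>MM. g 1 = 7"
  by (rule bexI[of _ "(cc \<circ> cc \<circ> cc \<circ> cc \<circ> cc \<circ> cc)"]) (simp_all add: MM_words)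

lemma lev0_8: "\<exists>g\<in>MM. g 1 = 8"
  by (rule bexI[of _ "(cc \<circ> cc \<circ> cc \<circ> cc \<circ> cc \<circ> cc \<circ> cc)"]) (simp_all add: MM_words)

lemma lev0_9: "\<exists>g\<in>MM. g 1 = 9"
  by (rule bexI[of _ "(cc \<circ> cc \<circ> cc \<circ> cc \<circ> cc \<circ> cc \<circ> cc \<circ> cc)"]) (simp_all add: MM_words)

lemma lev0_10: "\<exists>g\<in>MM. g 1 = 10"
  by (rule bexI[of _ "(cc \<circ> cc \<circ> cc \<circ> cc \<circ> cc \<circ> cc \<circ> cc \<circ> cc \<circ> cc)"]) (simp_all add: MM_words)

lemma lev0_11: "\<exists>g\<in>MM. g 1 = 11"
  by (rule bexI[of _ "(cc \<circ> cc \<circ> cc \<circ> cc \<circ> cc \<circ> cc \<circ> cc \<circ> cc \<circ> cc \<circ> cc)"]) (simp_all add: MM_words)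

lemma lev1_2: "\<exists>g\<in>MM. g 1 = 1 \<and> g 2 = 2"
  by (rule bexI[of _ "id"]) (simp_all add: MM_words)

lemma lev1_3: "\<exists>g\<in>MM. g 1 = 1 \<and> g 2 = 3"
  by (rule bexI[of _ "(bb \<circ> cc \<circ> cc \<circ> bb \<circ> cc \<circ> cc \<circ> cc)"]) (simp_all add: MM_words)

lemma lev1_4: "\<exists>g\<in>MM. g 1 = 1 \<and> g 2 = 4"
  by (rule bexI[of _ "(bb \<circ> cc \<circ> bb \<circ> bb \<circ> cc \<circ> cc)"]) (simp_all add: MM_words)

lemma lev1_5: "\<exists>g\<in>MM. g 1 = 1 \<and> g 2 = 5"
  by (rule bexI[of _ "(bb \<circ> bb \<circ> bb \<circ> cc \<circ> bb \<circ> bb \<circ> cc \<circ> cc)"]) (simp_all add: MM_words)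

lemma lev1_6: "\<exists>g\<in>MM. g 1 = 1 \<and> g 2 = 6"
  by (rule bexI[of _ "(cc \<circ> bb \<circ> bb \<circ> cc \<circ> cc)"]) (simp_all add: MM_words)

lemma lev1_7: "\<exists>g\<in>MM. g 1 = 1 \<and> g 2 = 7"
  by (rule bexI[of _ "(cc \<circ> bb \<circ> cc \<circ> bb \<circ> cc \<circ> cc \<circ> cc \<circ> cc)"]) (simp_all add: MM_words)

lemma lev1_8: "\<exists>g\<in>MM. g 1 = 1 \<and> g 2 = 8"
  by (rule bexI[of _ "(cc \<circ> cc \<circ> bb \<circ> cc \<circ> cc \<circ> cc)"]) (simp_all add: MM_words)

lemma lev1_9: "\<exists>g\<in>MM. g 1 = 1 \<and> g 2 = 9"
  by (rule bexI[of _ "(cc \<circ> bb \<circ> cc \<circ> bb \<circ> bb \<circ> bb \<circ> cc \<circ> cc \<circ> cc)"]) (simp_all add: MM_words)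

lemma lev1_10: "\<exists>g\<in>MM. g 1 = 1 \<and> g 2 = 10"
  by (rule bexI[of _ "(bb \<circ> bb \<circ> cc \<circ> bb \<circ> bb \<circ> cc \<circ> cc)"]) (simp_all add: MM_words)

lemma lev1_11: "\<exists>g\<in>MM. g 1 = 1 \<and> g 2 = 11"
  by (rule bexI[of _ "(cc \<circ> cc \<circ> bb \<circ> cc \<circ> cc \<circ> bb \<circ> cc)"]) (simp_all add: MM_words)

lemma lev2_3: "\<exists>g\<in>MM. g 1 = 1 \<and> g 2 = 2 \<and> g 3 = 3"
  by (rule bexI[of _ "id"]) (simp_all add: MM_words)

lemma lev2_4: "\<exists>g\<in>MM. g 1 = 1 \<and> g 2 = 2 \<and> g 3 = 4"
  by (rule bexI[of _ "(cc \<circ> bb \<circ> cc \<circ> cc \<circ> cc \<circ> cc \<circ> cc \<circ> bb \<circ> cc \<circ> bb)"]) (simp_all add: MM_words)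

lemma lev2_5: "\<exists>g\<in>MM. g 1 = 1 \<and> g 2 = 2 \<and> g 3 = 5"
  by (rule bexI[of _ "(cc \<circ> bb \<circ> cc \<circ> cc \<circ> cc \<circ> cc \<circ> cc \<circ> bb \<circ> cc \<circ> bb \<circ> bb)"]) (simp_all add: MM_words)

lemma lev2_6: "\<exists>g\<in>MM. g 1 = 1 \<and> g 2 = 2 \<and> g 3 = 6"
  by (rule bexI[of _ "(cc \<circ> bb \<circ> cc \<circ> bb \<circ> cc \<circ> bb \<circ> cc \<circ> bb \<circ> bb \<circ> cc \<circ> cc \<circ> cc)"]) (simp_all add: MM_words)

lemma lev2_7: "\<exists>g\<in>MM. g 1 = 1 \<and> g 2 = 2 \<and> g 3 = 7"
  by (rule bexI[of _ "(bb)"]) (simp_all add: MM_words)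

lemma lev2_8: "\<exists>g\<in>MM. g 1 = 1 \<and> g 2 = 2 \<and> g 3 = 8"
  by (rule bexI[of _ "(bb \<circ> bb \<circ> bb)"]) (simp_all add: MM_words)

lemma lev2_9: "\<exists>g\<in>MM. g 1 = 1 \<and> g 2 = 2 \<and> g 3 = 9"
  by (rule bexI[of _ "(cc \<circ> cc \<circ> bb \<circ> cc \<circ> bb \<circ> bb \<circ> cc \<circ> bb \<circ> cc \<circ> cc \<circ> bb \<circ> cc)"]) (simp_all add: MM_words)

lemma lev2_10: "\<exists>g\<in>MM. g 1 = 1 \<and> g 2 = 2 \<and> g 3 = 10"
  by (rule bexI[of _ "(bb \<circ> cc \<circ> bb \<circ> cc \<circ> cc \<circ> cc \<circ> cc \<circ> cc \<circ> bb \<circ> cc \<circ> bb)"]) (simp_all add: MM_words)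

lemma lev2_11: "\<exists>g\<in>MM. g 1 = 1 \<and> g 2 = 2 \<and> g 3 = 11"
  by (rule bexI[of _ "(bb \<circ> bb)"]) (simp_all add: MM_words)

lemma lev3_4: "\<exists>g\<in>MM. g 1 = 1 \<and> g 2 = 2 \<and> g 3 = 3 \<and> g 4 = 4"
  by (rule bexI[of _ "id"]) (simp_all add: MM_words)

lemma lev3_6: "\<exists>g\<in>MM. g 1 = 1 \<and> g 2 = 2 \<and> g 3 = 3 \<and> g 4 = 6"
  by (rule bexI[of _ "(cc \<circ> cc \<circ> cc \<circ> bb \<circ> bb \<circ> cc \<circ> bb \<circ> cc \<circ> bb \<circ> cc \<circ> cc \<circ> bb \<circ> cc)"]) (simp_all add: MM_words)

lemma lev3_7: "\<exists>g\<in>MM. g 1 = 1 \<and> g 2 = 2 \<and> g 3 = 3 \<and> g 4 = 7"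
  by (rule bexI[of _ "(bb \<circ> cc \<circ> cc \<circ> bb \<circ> bb \<circ> cc \<circ> bb \<circ> cc \<circ> cc \<circ> cc \<circ> bb \<circ> cc \<circ> cc)"]) (simp_all add: MM_words)

lemma lev3_9: "\<exists>g\<in>MM. g 1 = 1 \<and> g 2 = 2 \<and> g 3 = 3 \<and> g 4 = 9"
  by (rule bexI[of _ "(bb \<circ> bb \<circ> cc \<circ> bb \<circ> cc \<circ> cc \<circ> cc \<circ> cc \<circ> cc \<circ> bb \<circ> cc)"]) (simp_all add: MM_words)

lemma lev3_10: "\<exists>g\<in>MM. g 1 = 1 \<and> g 2 = 2 \<and> g 3 = 3 \<and> g 4 = 10"
  by (rule bexI[of _ "(bb \<circ> bb \<circ> cc \<circ> bb \<circ> cc \<circ> cc \<circ> cc \<circ> cc \<circ> bb \<circ> cc \<circ> bb \<circ> cc \<circ> cc)"]) (simp_all add: MM_words)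

lemma pw_1: "\<exists>g\<in>MM. g 1 = 1 \<and> g 3 = 7"
  by (rule bexI[of _ "(bb)"]) (simp_all add: MM_words)

lemma pw_2: "\<exists>g\<in>MM. g 2 = 2 \<and> g 3 = 7"
  by (rule bexI[of _ "(bb)"]) (simp_all add: MM_words)

lemma pw_3: "\<exists>g\<in>MM. g 3 = 3 \<and> g 1 = 2"
  by (rule bexI[of _ "(bb \<circ> cc \<circ> bb)"]) (simp_all add: MM_words)

lemma pw_4: "\<exists>g\<in>MM. g 4 = 4 \<and> g 1 = 7"
  by (rule bexI[of _ "(bb \<circ> cc \<circ> cc)"]) (simp_all add: MM_words)

lemma pw_5: "\<exists>g\<in>MM. g 5 = 5 \<and> g 1 = 3"
  by (rule bexI[of _ "(cc \<circ> bb \<circ> cc)"]) (simp_all add: MM_words)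

lemma pw_6: "\<exists>g\<in>MM. g 6 = 6 \<and> g 1 = 3"
  by (rule bexI[of _ "(cc \<circ> cc \<circ> bb)"]) (simp_all add: MM_words)

lemma pw_7: "\<exists>g\<in>MM. g 7 = 7 \<and> g 1 = 2"
  by (rule bexI[of _ "(bb \<circ> bb \<circ> cc)"]) (simp_all add: MM_words)

lemma pw_8: "\<exists>g\<in>MM. g 8 = 8 \<and> g 1 = 2"
  by (rule bexI[of _ "(cc \<circ> bb \<circ> bb)"]) (simp_all add: MM_words)

lemma pw_9: "\<exists>g\<in>MM. g 9 = 9 \<and> g 3 = 7"
  by (rule bexI[of _ "(bb)"]) (simp_all add: MM_words)

lemma pw_10: "\<exists>g\<in>MM. g 10 = 10 \<and> g 1 = 4"
  by (rule bexI[of _ "(cc \<circ> cc \<circ> bb \<circ> cc)"]) (simp_all add: MM_words)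

lemma pw_11: "\<exists>g\<in>MM. g 11 = 11 \<and> g 1 = 4"
  by (rule bexI[of _ "(cc \<circ> cc \<circ> cc \<circ> bb)"]) (simp_all add: MM_words)



lemma chain_card:
  assumes fin: "finite L" and comp: "\<And>g h. g \<in> L \<Longrightarrow> h \<in> L \<Longrightarrow> g \<circ> h \<in> L"
    and inj: "\<And>g. g \<in> L \<Longrightarrow> inj g"
    and wit: "\<And>q. q \<in> Q \<Longrightarrow> \<exists>g\<in>L. g p = q"
  shows "card Q * card {g\<in>L. g p = p} \<le> card L"
proof -
  obtain f where f: "\<And>q. q \<in> Q \<Longrightarrow> f q \<in> L \<and> f q p = q" using wit by metis
  let ?S = "{g\<in>L. g p = p}"
  have i: "inj_on (\<lambda>(q,h). f q \<circ> h) (Q \<times> ?S)"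
  proof (rule inj_onI, clarify)
    fix q h q' h' assume a: "q \<in> Q" "h \<in> L" "h p = p" "q' \<in> Q" "h' \<in> L" "h' p = p"
      and e: "f q \<circ> h = f q' \<circ> h'"
    have "f q (h p) = f q' (h' p)" using e by (metis comp_apply)
    hence qq: "q = q'" using a f by simp
    have "inj (f q)" using inj f a(1) by blast
    have "h = h'"
    proof
      fix x have "f q (h x) = f q (h' x)" using e qq by (metis comp_apply)
      then show "h x = h' x" using \<open>inj (f q)\<close> by (simp add: inj_eq)
    qed
    then show "q = q' \<and> h = h'" using qq by simp
  qed
  have "(\<lambda>(q,h). f q \<circ> h) ` (Q \<times> ?S) \<subseteq> L" using f comp by auto
  hence "card (Q \<times> ?S) \<le> card L" using card_inj_on_le[OF i _ fin] by blast
  then show ?thesis by (simp add: card_cartesian_product)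
qed

definition compclosed :: "(nat \<Rightarrow> nat) set \<Rightarrow> bool" where
  "compclosed L \<longleftrightarrow> finite L \<and> (\<forall>g\<in>L. \<forall>h\<in>L. g \<circ> h \<in> L) \<and> (\<forall>g\<in>L. inj g)"

lemma compclosed_fix: "compclosed L \<Longrightarrow> compclosed {g\<in>L. g p = p}"
  unfolding compclosed_def by auto

lemma chain_card':
  assumes "compclosed L" "\<And>q. q \<in> Q \<Longrightarrow> \<exists>g\<in>L. g p = q"
  shows "card Q * card {g\<in>L. g p = p} \<le> card L"
  using assms unfolding compclosed_def by (intro chain_card) auto

lemma MM_compclosed: "compclosed MM"
  unfolding compclosed_def
proof (intro conjI ballI)
  show "finite MM" using GG_finite MM_def by (metis (no_types, lifting) finite_subset mem_Collect_eq subsetI)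
  show "g \<circ> h \<in> MM" if "g \<in> MM" "h \<in> MM" for g h using MM_comp that by blast
  show "inj g" if "g \<in> MM" for g using that GG_bij bij_is_inj unfolding MM_def by blast
qed

definition "L1 = {g\<in>MM. g 1 = 1}"
definition "L2 = {g\<in>L1. g 2 = 2}"
definition "L3 = {g\<in>L2. g 3 = 3}"
definition "L4 = {g\<in>L3. g 4 = 4}"

lemma cL1: "compclosed L1" unfolding L1_def by (rule compclosed_fix[OF MM_compclosed])
lemma cL2: "compclosed L2" unfolding L2_def by (rule compclosed_fix[OF cL1])
lemma cL3: "compclosed L3" unfolding L3_def by (rule compclosed_fix[OF cL2])
lemma cL4: "compclosed L4" unfolding L4_def by (rule compclosed_fix[OF cL3])

lemma step0: "card {1..11::nat} * card L1 \<le> card MM"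
  unfolding L1_def
proof (rule chain_card'[OF MM_compclosed])
  fix q :: nat assume "q \<in> {1..11}"
  hence "q = 1 \<or> q = 2 \<or> q = 3 \<or> q = 4 \<or> q = 5 \<or> q = 6 \<or> q = 7 \<or> q = 8 \<or> q = 9 \<or> q = 10 \<or> q = 11" unfolding atLeastAtMost_iff by presburger
  then show "\<exists>g\<in>MM. g 1 = q"
    using lev0_1 lev0_2 lev0_3 lev0_4 lev0_5 lev0_6 lev0_7 lev0_8 lev0_9 lev0_10 lev0_11 by blast
qed

lemma step1: "card {2..11::nat} * card L2 \<le> card L1"
  unfolding L2_def
proof (rule chain_card'[OF cL1])
  fix q :: nat assume "q \<in> {2..11}"
  hence "q = 2 \<or> q = 3 \<or> q = 4 \<or> q = 5 \<or> q = 6 \<or> q = 7 \<or> q = 8 \<or> q = 9 \<or> q = 10 \<or> q = 11" unfolding atLeastAtMost_iff by presburger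
  then show "\<exists>g\<in>L1. g 2 = q"
    using lev1_2 lev1_3 lev1_4 lev1_5 lev1_6 lev1_7 lev1_8 lev1_9 lev1_10 lev1_11 unfolding L1_def by auto
qed

lemma step2: "card {3..11::nat} * card L3 \<le> card L2"
  unfolding L3_def
proof (rule chain_card'[OF cL2])
  fix q :: nat assume "q \<in> {3..11}"
  hence "q = 3 \<or> q = 4 \<or> q = 5 \<or> q = 6 \<or> q = 7 \<or> q = 8 \<or> q = 9 \<or> q = 10 \<or> q = 11" unfolding atLeastAtMost_iff by presburger
  then show "\<exists>g\<in>L2. g 3 = q"
    using lev2_3 lev2_4 lev2_5 lev2_6 lev2_7 lev2_8 lev2_9 lev2_10 lev2_11 unfolding L2_def L1_def by auto
qed

lemma step3: "card {4,6,7,9,10::nat} * card L4 \<le> card L3"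
  unfolding L4_def
proof (rule chain_card'[OF cL3])
  fix q :: nat assume "q \<in> {4,6,7,9,10}"
  then show "\<exists>g\<in>L3. g 4 = q"
    using lev3_4 lev3_6 lev3_7 lev3_9 lev3_10 unfolding L3_def L2_def L1_def by auto
qed

lemma L4_pos: "card L4 \<ge> 1"
proof -
  have "id \<in> L4" unfolding L4_def L3_def L2_def L1_def using MM_id by simp
  moreover have "finite L4" using cL4 unfolding compclosed_def by blast
  ultimately show ?thesis by (metis One_nat_def Suc_leI card_gt_0_iff empty_iff)
qed

lemma MM_card: "card MM \<ge> 4950"
proof -
  have "card {4,6,7,9,10::nat} = 5" by simp
  have "4950 = 11 * (10 * (9 * (5 * 1::nat)))" by simp
  also have "\<dots> \<le> 11 * (10 * (9 * (5 * card L4)))" using L4_pos by simp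
  also have "\<dots> \<le> 11 * (10 * (9 * card L3))" using step3 \<open>card {4,6,7,9,10::nat} = 5\<close> by simp
  also have "\<dots> \<le> 11 * (10 * card L2)" using step2 by simp
  also have "\<dots> \<le> 11 * card L1" using step1 by simp
  also have "\<dots> \<le> card MM" using step0 by simp
  finally show ?thesis .
qed


lemma evenperm_conj:
  assumes "s permutes {1..11::nat}" "g permutes {1..11}"
  shows "evenperm (inv' s \<circ> g \<circ> s) = evenperm g"
proof -
  have ps: "permutation s" "permutation (inv' s)" "permutation g"
    using assms permutation_permutes permutes_inv by (metis finite_atLeastAtMost)+
  have "permutation (inv' s \<circ> g)" using ps permutation_compose by blast
  then have "evenperm (inv' s \<circ> g \<circ> s) = (evenperm (inv' s \<circ> g) = evenperm s)"
    using evenperm_comp ps by blast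
  also have "evenperm (inv' s \<circ> g) = (evenperm (inv' s) = evenperm g)"
    using evenperm_comp ps by blast
  also have "evenperm (inv' s) = evenperm s" using evenperm_inv ps by blast
  finally show ?thesis by blast
qed

lemma conj_carrier:
  assumes "s permutes {1..11::nat}" "g \<in> carrier GG"
  shows "inv' s \<circ> g \<circ> s \<in> carrier GG"
proof -
  have g: "g permutes {1..11}" "evenperm g" using assms(2) unfolding alt_group_carrier by auto
  have "inv' s \<circ> g \<circ> s permutes {1..11}"
    using permutes_compose[OF assms(1) permutes_compose[OF g(1) permutes_inv[OF assms(1)]]]
    by (simp add: o_assoc)
  then show ?thesis unfolding alt_group_carrier using evenperm_conj[OF assms(1) g(1)] g(2) by simp
qed

lemma conj_carrier':
  assumes "s permutes {1..11::nat}" "g \<in> carrier GG"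
  shows "s \<circ> g \<circ> inv' s \<in> carrier GG"
proof -
  have "inv' (inv' s) = s" using assms(1) by (simp add: inv_inv_eq permutes_bij)
  then show ?thesis using conj_carrier[OF permutes_inv[OF assms(1)] assms(2)] by simp
qed

definition Cj :: "(nat \<Rightarrow> nat) \<Rightarrow> (nat \<Rightarrow> nat) set \<Rightarrow> (nat \<Rightarrow> nat) set" where
  "Cj s L = {g \<in> carrier GG. inv' s \<circ> g \<circ> s \<in> L}"

lemma Cj_subgroup:
  assumes s: "s permutes {1..11::nat}" and L: "subgroup L GG"
  shows "subgroup (Cj s L) GG"
proof
  have o1: "s \<circ> inv' s = id" "inv' s \<circ> s = id" using permutes_inv_o[OF s] by auto
  have Lm: "g \<circ> h \<in> L" if "g \<in> L" "h \<in> L" for g h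
    using subgroup.m_closed[OF L that] by (simp add: GG_mult)
  show "Cj s L \<subseteq> carrier GG" unfolding Cj_def by auto
  show "x \<otimes>\<^bsub>GG\<^esub> y \<in> Cj s L" if "x \<in> Cj s L" "y \<in> Cj s L" for x y
  proof -
    have "inv' s \<circ> (x \<circ> y) \<circ> s = (inv' s \<circ> x \<circ> s) \<circ> (inv' s \<circ> y \<circ> s)"
      using o1 by (simp add: fun_eq_iff)
    then show ?thesis using that Lm GG_comp_closed unfolding Cj_def by (auto simp: GG_mult)
  qed
  show "\<one>\<^bsub>GG\<^esub> \<in> Cj s L"
    using subgroup.one_closed[OF L] GG_id o1 unfolding Cj_def by (simp add: GG_one)
  show "inv\<^bsub>GG\<^esub> x \<in> Cj s L" if "x \<in> Cj s L" for x
  proof -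
    have x: "x \<in> carrier GG" "inv' s \<circ> x \<circ> s \<in> L" using that unfolding Cj_def by auto
    have bs: "bij s" "bij (inv' s)" using s permutes_bij permutes_inv by blast+
    have bx: "bij x" using GG_bij[OF x(1)] .
    have "inv' (inv' s \<circ> x \<circ> s) = inv' s \<circ> inv' x \<circ> inv' (inv' s)"
      using bs bx by (simp add: o_inv_distrib bij_comp o_assoc)
    also have "inv' (inv' s) = s" using bs by (simp add: inv_inv_eq)
    finally have e: "inv' s \<circ> inv' x \<circ> s = inv' (inv' s \<circ> x \<circ> s)" by (rule sym)
    have "inv' (inv' s \<circ> x \<circ> s) \<in> L"
      using subgroup.m_inv_closed[OF L x(2)] GG_inv subgroup.mem_carrier[OF L x(2)] by simp
    then show ?thesis using GG_inv[OF x(1)] alt_group_inv_closed[OF x(1)] e unfolding Cj_def by simp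
  qed
qed

lemma Cj_mem:
  assumes s: "s permutes {1..11::nat}" and "m \<in> L" "L \<subseteq> carrier GG"
  shows "s \<circ> m \<circ> inv' s \<in> Cj s L"
proof -
  have o1: "s \<circ> inv' s = id" "inv' s \<circ> s = id" using permutes_inv_o[OF s] by auto
  have "inv' s \<circ> (s \<circ> m \<circ> inv' s) \<circ> s = m"
    using o1 by (simp add: fun_eq_iff)
  then show ?thesis using assms conj_carrier' unfolding Cj_def by auto
qed

lemma Cj_card:
  assumes s: "s permutes {1..11::nat}" and L: "L \<subseteq> carrier GG"
  shows "card (Cj s L) = card L"
proof -
  have o1: "s \<circ> inv' s = id" "inv' s \<circ> s = id" using permutes_inv_o[OF s] by auto
  have "bij_betw (\<lambda>g. inv' s \<circ> g \<circ> s) (Cj s L) L"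
  proof (rule bij_betw_imageI)
    show "inj_on (\<lambda>g. inv' s \<circ> g \<circ> s) (Cj s L)"
    proof (rule inj_onI)
      fix g h assume "inv' s \<circ> g \<circ> s = inv' s \<circ> h \<circ> s"
      hence "s \<circ> (inv' s \<circ> g \<circ> s) \<circ> inv' s = s \<circ> (inv' s \<circ> h \<circ> s) \<circ> inv' s" by simp
      then show "g = h" using o1 by (simp add: o_assoc) (simp add: comp_assoc)
    qed
    show "(\<lambda>g. inv' s \<circ> g \<circ> s) ` Cj s L = L"
    proof
      show "(\<lambda>g. inv' s \<circ> g \<circ> s) ` Cj s L \<subseteq> L" unfolding Cj_def by auto
      show "L \<subseteq> (\<lambda>g. inv' s \<circ> g \<circ> s) ` Cj s L"
      proof
        fix m assume "m \<in> L"
        have "inv' s \<circ> (s \<circ> m \<circ> inv' s) \<circ> s = m"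
          using o1 by (simp add: fun_eq_iff)
        then show "m \<in> (\<lambda>g. inv' s \<circ> g \<circ> s) ` Cj s L"
          using Cj_mem[OF s \<open>m \<in> L\<close> L] by (metis image_eqI)
      qed
    qed
  qed
  then show ?thesis by (rule bij_betw_same_card)
qed

lemma Cj_proper:
  assumes s: "s permutes {1..11::nat}" and L: "L \<subseteq> carrier GG" "L \<noteq> carrier GG"
  shows "Cj s L \<noteq> carrier GG"
proof
  assume "Cj s L = carrier GG"
  hence "card L = card (carrier GG)" using Cj_card[OF s L(1)] by simp
  hence "L = carrier GG" using card_subset_eq[OF GG_finite L(1)] by simp
  then show False using L(2) by simp
qed


lemma cc_out: "i \<notin> {1..11} \<Longrightarrow> cc i = i"
  unfolding cc_def by (rule id_outside_supp) auto

lemma cc_succ: "i \<in> {1..10} \<Longrightarrow> cc i = Suc i"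
proof -
  assume "i \<in> {1..10}"
  hence "i = 1 \<or> i = 2 \<or> i = 3 \<or> i = 4 \<or> i = 5 \<or> i = 6 \<or> i = 7 \<or> i = 8 \<or> i = 9 \<or> i = 10"
    unfolding atLeastAtMost_iff by presburger
  then show ?thesis by auto
qed

lemma dvd11: "(e::nat) dvd 11 \<Longrightarrow> e = 1 \<or> e = 11"
proof -
  assume d: "e dvd 11"
  have "e \<le> 11" by (rule dvd_imp_le[OF d]) simp
  moreover have "e \<noteq> 0" using d by (metis dvd_0_left_iff zero_neq_numeral)
  ultimately have "e \<in> {1..11}" by auto
  hence "e = 1 \<or> e = 2 \<or> e = 3 \<or> e = 4 \<or> e = 5 \<or> e = 6 \<or> e = 7 \<or> e = 8 \<or> e = 9 \<or> e = 10 \<or> e = 11"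
    unfolding atLeastAtMost_iff by presburger
  then show ?thesis using d by auto
qed

lemma eleven_cycle:
  assumes H: "subgroup H GG" "x \<in> H" "x \<noteq> id"
    and fpf: "\<And>h a. h \<in> H \<Longrightarrow> h \<noteq> id \<Longrightarrow> a \<in> {1..11} \<Longrightarrow> h a \<noteq> a"
  shows "\<exists>s. s permutes {1..11} \<and> inv' s \<circ> x \<circ> s = cc"
proof -
  define S :: "nat set" where "S = {1..11}"
  have xc: "x \<in> carrier GG" using subgroup.mem_carrier[OF H(1,2)] .
  have xp: "x permutes S" using GG_perm[OF xc] S_def by simp
  have perm: "permutation x" using xp permutation_permutes S_def by blast
  have injx: "inj x" using xp permutes_inj by blast
  have powH: "x ^^ n \<in> H" for n
  proof (induction n)
    case 0
    have "x ^^ 0 = id" by simp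
    then show ?case using subgroup.one_closed[OF H(1)] by (metis GG_one)
  next
    case (Suc n)
    have "x ^^ Suc n = (x ^^ n) \<otimes>\<^bsub>GG\<^esub> x" by (simp add: GG_mult funpow_Suc_right del: funpow.simps)
    then show ?case using subgroup.m_closed[OF H(1) Suc H(2)] by simp
  qed
  have fix1: "x ^^ n = id" if "(x ^^ n) a = a" "a \<in> S" for n a
    using fpf[OF powH _ ] that S_def by blast
  define e where "e = least_power x 1"
  have e0: "e > 0" "(x ^^ e) 1 = 1" using least_power_of_permutation[OF perm] e_def by auto
  have xe: "x ^^ e = id" using fix1[OF e0(2)] S_def by simp
  have lp: "least_power x a = e" if "a \<in> S" for a
  proof -
    have "least_power x a dvd e" using least_power_minimal[where p=x and n=e and a=a] xe by simp
    moreover have "(x ^^ least_power x a) a = a" using least_power_of_permutation[OF perm] by blast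
    hence "x ^^ least_power x a = id" using fix1 that by blast
    hence "e dvd least_power x a" using least_power_minimal[where p=x and n="least_power x a" and a=1] e_def by simp
    ultimately show ?thesis by (simp add: dvd_antisym)
  qed
  have dist: "(x ^^ i) a \<noteq> (x ^^ j) a" if "a \<in> S" "i < j" "j < e" for a i j
  proof
    assume "(x ^^ i) a = (x ^^ j) a"
    hence "(x ^^ (j - i)) a = a" using funpow_diff[OF injx, of i j a] that by simp
    hence "e dvd (j - i)" using least_power_minimal[where p=x and n="j - i" and a=a] lp[OF that(1)] by simp
    moreover have "0 < j - i" "j - i < e" using that by auto
    ultimately show False by (simp add: nat_dvd_not_less)
  qed
  have pS: "(x ^^ n) a \<in> S" if "a \<in> S" for n a
    using permutes_in_image[OF permutes_funpow[OF xp]] that by blast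
  have modl: "(x ^^ n) a = (x ^^ (n mod e)) a" for n a
  proof -
    have 1: "x ^^ (n mod e + e * (n div e)) = x ^^ (n mod e) \<circ> (x ^^ e) ^^ (n div e)"
      by (simp only: funpow_add funpow_mult)
    have 2: "(x ^^ e) ^^ (n div e) = id" using xe by simp
    have "n mod e + e * (n div e) = n" by simp
    then show ?thesis using 1 2 by simp
  qed
  define r where "r = {(a,b). a \<in> S \<and> b \<in> S \<and> (\<exists>n. (x ^^ n) a = b)}"
  have eq: "equiv S r"
  proof (rule equivI)
    show "refl_on S r" unfolding refl_on_def r_def by (auto intro: exI[of _ 0])
    show "sym r"
    proof (rule symI)
      fix a b assume "(a, b) \<in> r"
      then obtain n where a: "a \<in> S" "b \<in> S" "(x ^^ n) a = b" unfolding r_def by auto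
      have "(x ^^ (e * n - n)) ((x ^^ n) a) = (x ^^ (e * n - n + n)) a" by (simp add: funpow_add)
      also have "e * n - n + n = e * n" using e0(1) by (simp add: le_add_diff_inverse2)
      also have "(x ^^ (e * n)) a = a" using xe by (simp add: funpow_mult[symmetric] mult.commute)
      finally have "(x ^^ (e * n - n)) b = a" using a by simp
      then show "(b, a) \<in> r" using a unfolding r_def by blast
    qed
    show "trans r" unfolding trans_def r_def
      by (clarify, metis comp_apply funpow_add)
    show "r \<subseteq> S \<times> S" unfolding r_def by auto
  qed
  have cls: "card X = e" if "X \<in> S // r" for X
  proof -
    obtain a where a: "a \<in> S" "X = r `` {a}" using \<open>X \<in> S // r\<close> by (auto simp: quotient_def)
    have "X = (\<lambda>n. (x ^^ n) a) ` {..<e}"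
    proof
      show "X \<subseteq> (\<lambda>n. (x ^^ n) a) ` {..<e}"
      proof
        fix b assume "b \<in> X"
        then obtain n where "b = (x ^^ n) a" using a unfolding r_def by auto
        hence "b = (x ^^ (n mod e)) a" using modl by simp
        moreover have "n mod e < e" using e0(1) by simp
        ultimately show "b \<in> (\<lambda>n. (x ^^ n) a) ` {..<e}" by blast
      qed
      show "(\<lambda>n. (x ^^ n) a) ` {..<e} \<subseteq> X" using a pS unfolding r_def by auto
    qed
    moreover have "inj_on (\<lambda>n. (x ^^ n) a) {..<e}"
    proof (rule inj_onI)
      fix i j assume ij: "i \<in> {..<e}" "j \<in> {..<e}" "(x ^^ i) a = (x ^^ j) a"
      show "i = j"
      proof (rule ccontr)
        assume "i \<noteq> j"
        then show False using dist[OF a(1)] ij by (metis lessThan_iff linorder_neqE_nat)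
      qed
    qed
    ultimately show ?thesis by (simp add: card_image)
  qed
  have "e dvd card S" by (rule equiv_imp_dvd_card[OF _ eq]) (simp_all add: S_def cls)
  hence "e dvd 11" using S_def by simp
  moreover have "e \<noteq> 1"
  proof
    assume "e = 1"
    hence "x 1 = 1" using e0(2) by simp
    hence "x ^^ 1 = id" using fix1[of 1 1] S_def by simp
    then show False using H(3) by simp
  qed
  ultimately have e11: "e = 11" using dvd11 by blast
  define s where "s i = (if i \<in> S then (x ^^ (i - 1)) 1 else i)" for i
  have sS: "s ` S \<subseteq> S" unfolding s_def using pS S_def by auto
  have sinj: "inj_on s S"
  proof (rule inj_onI)
    fix i j assume ij: "i \<in> S" "j \<in> S" "s i = s j"
    hence e: "(x ^^ (i - 1)) 1 = (x ^^ (j - 1)) 1" unfolding s_def by simp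
    have lt: "i - 1 < e" "j - 1 < e" "1 \<in> S" using ij e11 S_def by auto
    show "i = j"
    proof (rule ccontr)
      assume "i \<noteq> j"
      hence "i - 1 \<noteq> j - 1" using ij S_def by auto
      then show False using dist[OF lt(3)] lt e by (metis linorder_neqE_nat)
    qed
  qed
  have "bij_betw s S S" unfolding bij_betw_def
    using sinj endo_inj_surj[OF _ sS sinj] S_def by simp
  hence sp: "s permutes S" by (rule bij_imp_permutes) (simp add: s_def)
  have comm: "x \<circ> s = s \<circ> cc"
  proof
    fix i
    show "(x \<circ> s) i = (s \<circ> cc) i"
    proof (cases "i \<in> S")
      case False
      have "s i = i" using False s_def by simp
      moreover have "cc i = i" using cc_out False S_def by simp
      ultimately show ?thesis using permutes_not_in[OF xp False] by simp
    next
      case True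
      show ?thesis
      proof (cases "i = 11")
        case True
        have 11: "(11::nat) = Suc 10" by simp
        have 1: "(x ^^ 11) 1 = x ((x ^^ 10) 1)" unfolding 11 by (metis comp_apply funpow.simps(2))
        have "x (s 11) = x ((x ^^ 10) 1)" unfolding s_def S_def by simp
        also have "\<dots> = (x ^^ 11) 1" using 1 by simp
        also have "\<dots> = 1" using e0(2) e11 by simp
        finally show ?thesis using True s_def S_def by simp
      next
        case False
        hence i: "i \<in> {1..10}" using True S_def by auto
        have "s (cc i) = (x ^^ i) 1" using cc_succ[OF i] i unfolding s_def S_def by simp
        also have "\<dots> = x ((x ^^ (i - 1)) 1)" using i
          by (metis Suc_diff_1 atLeastAtMost_iff comp_apply funpow.simps(2) less_eq_Suc_le One_nat_def)
        also have "\<dots> = x (s i)" using True unfolding s_def by simp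
        finally show ?thesis by simp
      qed
    qed
  qed
  have "inv' s \<circ> x \<circ> s = inv' s \<circ> (x \<circ> s)" by (simp add: o_assoc)
  also have "\<dots> = inv' s \<circ> s \<circ> cc" using comm by (simp add: o_assoc)
  also have "\<dots> = cc" using permutes_inv_o(2)[OF sp] by simp
  finally show ?thesis using sp S_def by blast
qed


abbreviation "VV \<equiv> intersection_graph_vertices GG"
abbreviation "EE \<equiv> intersection_graph_adj GG"

lemma VV_iff: "X \<in> VV \<longleftrightarrow> subgroup X GG \<and> X \<noteq> {id} \<and> X \<noteq> carrier GG"
  unfolding intersection_graph_vertices_def by (simp add: GG_one)

lemma meet_adj: "X \<inter> Y \<noteq> {id} \<Longrightarrow> X = Y \<or> EE X Y"
  unfolding intersection_graph_adj_def by (auto simp: GG_one)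

lemma meetI: "g \<in> X \<Longrightarrow> g \<in> Y \<Longrightarrow> g \<noteq> id \<Longrightarrow> X \<inter> Y \<noteq> {id}"
  by auto

lemma tc_avoid: "\<exists>t\<in>carrier GG. t \<noteq> id \<and> t a = a \<and> t b = b"
proof -
  have c1: "cycle_of_list [1,2,3::nat] \<in> carrier GG" by (rule cycle_in_carrier) auto
  have c2: "cycle_of_list [4,5,6::nat] \<in> carrier GG" by (rule cycle_in_carrier) auto
  have c3: "cycle_of_list [7,8,9::nat] \<in> carrier GG" by (rule cycle_in_carrier) auto
  have n1: "cycle_of_list [1,2,3::nat] \<noteq> id"
  proof assume "cycle_of_list [1,2,3::nat] = id" hence "cycle_of_list [1,2,3::nat] 1 = 1" by simp
    then show False by (simp add: transpose_def) qed
  have n2: "cycle_of_list [4,5,6::nat] \<noteq> id"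
  proof assume "cycle_of_list [4,5,6::nat] = id" hence "cycle_of_list [4,5,6::nat] 4 = 4" by simp
    then show False by (simp add: transpose_def) qed
  have n3: "cycle_of_list [7,8,9::nat] \<noteq> id"
  proof assume "cycle_of_list [7,8,9::nat] = id" hence "cycle_of_list [7,8,9::nat] 7 = 7" by simp
    then show False by (simp add: transpose_def) qed
  show ?thesis
  proof (cases "a \<notin> {1,2,3} \<and> b \<notin> {1,2,3}")
    case True then show ?thesis using c1 n1 id_outside_supp[of _ "[1,2,3::nat]"] by auto
  next
    case F1: False
    show ?thesis
    proof (cases "a \<notin> {4,5,6} \<and> b \<notin> {4,5,6}")
      case True then show ?thesis using c2 n2 id_outside_supp[of _ "[4,5,6::nat]"] by auto
    next
      case False
      hence "a \<notin> {7,8,9} \<and> b \<notin> {7,8,9}" using F1 by auto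
      then show ?thesis using c3 n3 id_outside_supp[of _ "[7,8,9::nat]"] by auto
    qed
  qed
qed

lemma tc_move: "a \<in> {1..11} \<Longrightarrow> \<exists>t\<in>carrier GG. t a \<noteq> a"
proof -
  assume a: "a \<in> {1..11}"
  show ?thesis
  proof (cases "a \<notin> {1,2}")
    case True
    have "cycle_of_list [a,1,2] \<in> carrier GG" using a True by (intro cycle_in_carrier) auto
    moreover have "cycle_of_list [a,1,2] a = 1" using True by (simp add: transpose_def)
    ultimately show ?thesis using True by force
  next
    case False
    have "cycle_of_list [a,3,4] \<in> carrier GG" using a False by (intro cycle_in_carrier) auto
    moreover have "cycle_of_list [a,3,4] a = 3" using False by (auto simp: transpose_def)
    ultimately show ?thesis using False by force
  qed
qed

lemma Sfix_V: "a \<in> {1..11} \<Longrightarrow> Sfix a \<in> VV"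
proof -
  assume a: "a \<in> {1..11}"
  obtain t where t: "t \<in> carrier GG" "t \<noteq> id" "t a = a" using tc_avoid[of a a] by blast
  have tS: "t \<in> Sfix a" using t unfolding Sfix_def by simp
  have 1: "Sfix a \<noteq> {id}"
  proof
    assume "Sfix a = {id}"
    then show False using tS t(2) by simp
  qed
  obtain t' where t': "t' \<in> carrier GG" "t' a \<noteq> a" using tc_move[OF a] by blast
  have "t' \<notin> Sfix a" using t' unfolding Sfix_def by simp
  hence 2: "Sfix a \<noteq> carrier GG" using t'(1) by blast
  show ?thesis unfolding VV_iff using Sfix_subgroup 1 2 by blast
qed

lemma Sfix_meet: "Sfix a \<inter> Sfix b \<noteq> {id}"
proof -
  obtain t where t: "t \<in> carrier GG" "t \<noteq> id" "t a = a" "t b = b" using tc_avoid[of a b] by blast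
  have "t \<in> Sfix a" "t \<in> Sfix b" using t unfolding Sfix_def by simp_all
  then show ?thesis by (rule meetI[OF _ _ t(2)])
qed

definition good :: "(nat \<Rightarrow> nat) set \<Rightarrow> bool" where
  "good X \<longleftrightarrow> (\<exists>h\<in>X. h \<noteq> id \<and> (\<exists>a\<in>{1..11}. h a = a))"

lemma good_meet:
  assumes "X \<in> VV" "good X"
  obtains a where "a \<in> {1..11}" "X \<inter> Sfix a \<noteq> {id}"
proof -
  obtain h a where h: "h \<in> X" "h \<noteq> id" "a \<in> {1..11}" "h a = a" using assms(2) unfolding good_def by blast
  have "subgroup X GG" using assms(1) unfolding VV_iff by simp
  then have "h \<in> carrier GG" using h(1) by (rule subgroup.mem_carrier)
  then have "h \<in> Sfix a" using h unfolding Sfix_def by simp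
  then show ?thesis by (rule that[OF h(3) meetI[OF h(1) _ h(2)]])
qed

lemma pw_helper: "\<exists>g\<in>MM. g p = p \<and> g q = r \<Longrightarrow> q \<noteq> r \<Longrightarrow> \<exists>w\<in>MM. w p = p \<and> w \<noteq> id"
  by auto

lemma MM_fix: "p \<in> {1..11} \<Longrightarrow> \<exists>w\<in>MM. w p = p \<and> w \<noteq> id"
proof -
  assume "p \<in> {1..11}"
  hence "p = 1 \<or> p = 2 \<or> p = 3 \<or> p = 4 \<or> p = 5 \<or> p = 6 \<or> p = 7 \<or> p = 8 \<or> p = 9 \<or> p = 10 \<or> p = 11"
    unfolding atLeastAtMost_iff by presburger
  moreover have "\<exists>w\<in>MM. w 1 = 1 \<and> w \<noteq> id" by (rule pw_helper[OF pw_1]) simp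
  moreover have "\<exists>w\<in>MM. w 2 = 2 \<and> w \<noteq> id" by (rule pw_helper[OF pw_2]) simp
  moreover have "\<exists>w\<in>MM. w 3 = 3 \<and> w \<noteq> id" by (rule pw_helper[OF pw_3]) simp
  moreover have "\<exists>w\<in>MM. w 4 = 4 \<and> w \<noteq> id" by (rule pw_helper[OF pw_4]) simp
  moreover have "\<exists>w\<in>MM. w 5 = 5 \<and> w \<noteq> id" by (rule pw_helper[OF pw_5]) simp
  moreover have "\<exists>w\<in>MM. w 6 = 6 \<and> w \<noteq> id" by (rule pw_helper[OF pw_6]) simp
  moreover have "\<exists>w\<in>MM. w 7 = 7 \<and> w \<noteq> id" by (rule pw_helper[OF pw_7]) simp
  moreover have "\<exists>w\<in>MM. w 8 = 8 \<and> w \<noteq> id" by (rule pw_helper[OF pw_8]) simp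
  moreover have "\<exists>w\<in>MM. w 9 = 9 \<and> w \<noteq> id" by (rule pw_helper[OF pw_9]) simp
  moreover have "\<exists>w\<in>MM. w 10 = 10 \<and> w \<noteq> id" by (rule pw_helper[OF pw_10]) simp
  moreover have "\<exists>w\<in>MM. w 11 = 11 \<and> w \<noteq> id" by (rule pw_helper[OF pw_11]) simp
  ultimately show ?thesis by auto
qed

lemma bad_M:
  assumes "X \<in> VV" "\<not> good X"
  obtains M where "M \<in> VV" "X \<inter> M \<noteq> {id}" "card M \<ge> 4950" "\<And>b. b \<in> {1..11} \<Longrightarrow> M \<inter> Sfix b \<noteq> {id}"
proof -
  have X: "subgroup X GG" "X \<noteq> {id}" "X \<noteq> carrier GG" using assms(1) unfolding VV_iff by auto
  obtain x where x: "x \<in> X" "x \<noteq> id"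
  proof -
    have "\<one>\<^bsub>GG\<^esub> \<in> X" using subgroup.one_closed[OF X(1)] .
    hence "id \<in> X" by (simp add: GG_one)
    then obtain y where "y \<in> X" "y \<noteq> id" using X(2) by blast
    then show ?thesis using that by blast
  qed
  have fpf: "\<And>h a. h \<in> X \<Longrightarrow> h \<noteq> id \<Longrightarrow> a \<in> {1..11} \<Longrightarrow> h a \<noteq> a"
    using assms(2) unfolding good_def by blast
  obtain s where s: "s permutes {1..11}" "inv' s \<circ> x \<circ> s = cc"
    using eleven_cycle[of X x] X(1) x fpf by blast
  have MMc: "MM \<subseteq> carrier GG" unfolding MM_def by auto
  let ?M = "Cj s MM"
  have sg: "subgroup ?M GG" by (rule Cj_subgroup[OF s(1) MM_subgroup])
  have xc: "x \<in> carrier GG" using subgroup.mem_carrier[OF X(1) x(1)] .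
  have xM: "x \<in> ?M" unfolding Cj_def using xc s(2) cc_MM by simp
  have "?M \<in> VV" unfolding VV_iff
    using sg xM x(2) Cj_proper[OF s(1) MMc MM_proper] by auto
  moreover have "X \<inter> ?M \<noteq> {id}" using meetI[OF x(1) xM x(2)] .
  moreover have "card ?M \<ge> 4950" using Cj_card[OF s(1) MMc] MM_card by simp
  moreover have "?M \<inter> Sfix b \<noteq> {id}" if b: "b \<in> {1..11}" for b
  proof -
    have "inv' s b \<in> {1..11}" using permutes_in_image[OF permutes_inv[OF s(1)]] b by blast
    then obtain w where w: "w \<in> MM" "w (inv' s b) = inv' s b" "w \<noteq> id" using MM_fix by blast
    let ?g = "s \<circ> w \<circ> inv' s"
    have gM: "?g \<in> ?M" by (rule Cj_mem[OF s(1) w(1) MMc])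
    have gc: "?g \<in> carrier GG" using gM unfolding Cj_def by simp
    have "?g b = b" using w(2) permutes_inverses[OF s(1)] by simp
    hence gS: "?g \<in> Sfix b" using gc unfolding Sfix_def by simp
    have "?g \<noteq> id"
    proof
      assume "?g = id"
      hence "inv' s \<circ> ?g \<circ> s = id" using permutes_inv_o[OF s(1)] by simp
      moreover have "inv' s \<circ> ?g \<circ> s = w" using permutes_inv_o[OF s(1)] by (simp add: fun_eq_iff)
      ultimately show False using w(3) by simp
    qed
    then show ?thesis using meetI[OF gM gS] by simp
  qed
  ultimately show ?thesis by (rule that)
qed

lemma upper: "X \<in> VV \<Longrightarrow> Y \<in> VV \<Longrightarrow> graph_dist VV EE X Y \<le> 3"
proof -
  assume X: "X \<in> VV" and Y: "Y \<in> VV"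
  have sgV: "subgroup Z GG" if "Z \<in> VV" for Z using that unfolding VV_iff by blast
  show ?thesis
  proof (cases "good X")
    case gX: True
    obtain a where a: "a \<in> {1..11}" "X \<inter> Sfix a \<noteq> {id}" using good_meet[OF X gX] by blast
    show ?thesis
    proof (cases "good Y")
      case True
      obtain b where b: "b \<in> {1..11}" "Y \<inter> Sfix b \<noteq> {id}" using good_meet[OF Y True] by blast
      show ?thesis
      proof (rule walk3[OF X Sfix_V[OF a(1)] Sfix_V[OF b(1)] Y])
        show "X = Sfix a \<or> EE X (Sfix a)" using meet_adj[OF a(2)] .
        show "Sfix a = Sfix b \<or> EE (Sfix a) (Sfix b)" using meet_adj[OF Sfix_meet] .
        show "Sfix b = Y \<or> EE (Sfix b) Y" using meet_adj b(2) by (metis inf_commute)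
      qed
    next
      case False
      obtain M where M: "M \<in> VV" "Y \<inter> M \<noteq> {id}" "card M \<ge> 4950"
        "\<And>b. b \<in> {1..11} \<Longrightarrow> M \<inter> Sfix b \<noteq> {id}" using bad_M[OF Y False] by blast
      show ?thesis
      proof (rule walk3[OF X Sfix_V[OF a(1)] M(1) Y])
        show "X = Sfix a \<or> EE X (Sfix a)" using meet_adj[OF a(2)] .
        show "Sfix a = M \<or> EE (Sfix a) M" using meet_adj M(4)[OF a(1)] by (metis inf_commute)
        show "M = Y \<or> EE M Y" using meet_adj M(2) by (metis inf_commute)
      qed
    qed
  next
    case gX: False
    obtain M where M: "M \<in> VV" "X \<inter> M \<noteq> {id}" "card M \<ge> 4950"
      "\<And>b. b \<in> {1..11} \<Longrightarrow> M \<inter> Sfix b \<noteq> {id}" using bad_M[OF X gX] by blast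
    show ?thesis
    proof (cases "good Y")
      case True
      obtain b where b: "b \<in> {1..11}" "Y \<inter> Sfix b \<noteq> {id}" using good_meet[OF Y True] by blast
      show ?thesis
      proof (rule walk3[OF X M(1) Sfix_V[OF b(1)] Y])
        show "X = M \<or> EE X M" using meet_adj[OF M(2)] .
        show "M = Sfix b \<or> EE M (Sfix b)" using meet_adj[OF M(4)[OF b(1)]] .
        show "Sfix b = Y \<or> EE (Sfix b) Y" using meet_adj b(2) by (metis inf_commute)
      qed
    next
      case False
      obtain N where N: "N \<in> VV" "Y \<inter> N \<noteq> {id}" "card N \<ge> 4950"
        using bad_M[OF Y False] by blast
      have "4950 * 4950 \<le> card M * card N" using M(3) N(3) by (rule mult_le_mono)
      hence "card M * card N > 19958400" by simp
      hence MN: "M \<inter> N \<noteq> {id}" using nontriv_inter[OF sgV[OF M(1)] sgV[OF N(1)]] by blast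
      show ?thesis
      proof (rule walk3[OF X M(1) N(1) Y])
        show "X = M \<or> EE X M" using meet_adj[OF M(2)] .
        show "M = N \<or> EE M N" using meet_adj[OF MN] .
        show "N = Y \<or> EE N Y" using meet_adj N(2) by (metis inf_commute)
      qed
    qed
  qed
qed


locale LL =
  fixes L assumes sg: "subgroup L GG"
begin

lemma Lc: "g \<in> L \<Longrightarrow> g \<in> carrier GG" using subgroup.mem_carrier[OF sg] by blast
lemma Lcomp: "g \<in> L \<Longrightarrow> h \<in> L \<Longrightarrow> g \<circ> h \<in> L"
  using subgroup.m_closed[OF sg] by (simp add: GG_mult)
lemma Linv: "g \<in> L \<Longrightarrow> inv' g \<in> L"
  using subgroup.m_inv_closed[OF sg] GG_inv Lc by metis

definition T :: "nat \<Rightarrow> nat \<Rightarrow> nat \<Rightarrow> bool" where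
  "T a b c \<longleftrightarrow> cycle_of_list [a,b,c] \<in> L"

lemma conjT: assumes "g \<in> L" "distinct [a,b,c]" "T a b c" shows "T (g a) (g b) (g c)"
proof -
  have "bij g" using GG_bij Lc assms(1) by blast
  hence "g \<circ> cycle_of_list [a,b,c] \<circ> inv' g = cycle_of_list (map g [a,b,c])"
    using conjugation_of_cycle assms(2) by blast
  moreover have "g \<circ> cycle_of_list [a,b,c] \<circ> inv' g \<in> L"
    using assms Lcomp Linv unfolding T_def by blast
  ultimately show ?thesis unfolding T_def by simp
qed

lemma rotT: assumes "distinct [a,b,c]" "T a b c" shows "T b c a"
proof -
  have "cycle_of_list [a,b,c] = cycle_of_list [b,c,a]"
    using assms(1) by (auto simp: fun_eq_iff transpose_def)
  then show ?thesis using assms(2) unfolding T_def by simp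
qed

lemma invT: assumes "distinct [a,b,c]" "T a b c" shows "T a c b"
proof -
  have "cycle_of_list [a,c,b] = cycle_of_list [a,b,c] \<circ> cycle_of_list [a,b,c]"
    using assms(1) by (auto simp: fun_eq_iff transpose_def)
  then show ?thesis using assms(2) Lcomp unfolding T_def by simp
qed

lemma avoid2: "\<exists>x\<in>{3..11::nat}. x \<noteq> b \<and> x \<noteq> c"
proof (cases "b \<noteq> 3 \<and> c \<noteq> 3")
  case True then show ?thesis by (intro bexI[of _ 3]) auto
next
  case False
  show ?thesis
  proof (cases "b \<noteq> 4 \<and> c \<noteq> 4")
    case True then show ?thesis by (intro bexI[of _ 4]) auto
  next
    case False2: False
    then show ?thesis using False by (intro bexI[of _ 5]) auto
  qed
qed

lemma avoid3: "\<exists>x\<in>{3..11::nat}. x \<noteq> a \<and> x \<noteq> b \<and> x \<noteq> c"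
proof (cases "a \<noteq> 3 \<and> b \<noteq> 3 \<and> c \<noteq> 3")
  case True then show ?thesis by (intro bexI[of _ 3]) auto
next
  case F3: False
  show ?thesis
  proof (cases "a \<noteq> 4 \<and> b \<noteq> 4 \<and> c \<noteq> 4")
    case True then show ?thesis by (intro bexI[of _ 4]) auto
  next
    case F4: False
    show ?thesis
    proof (cases "a \<noteq> 5 \<and> b \<noteq> 5 \<and> c \<noteq> 5")
      case True then show ?thesis by (intro bexI[of _ 5]) auto
    next
      case False
      then show ?thesis using F3 F4 by (intro bexI[of _ 6]) auto
    qed
  qed
qed

context
  assumes base: "\<And>k. k \<in> {3..11} \<Longrightarrow> T 1 2 k"
begin

lemma i1: "k \<in> {3..11} \<Longrightarrow> T 1 k 2"
proof -
  assume k: "k \<in> {3..11}"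
  have "distinct [1,2,k]" using k by auto
  then show ?thesis using invT base[OF k] by blast
qed

lemma ii: assumes "j \<in> {3..11}" "k \<in> {3..11}" "j \<noteq> k" shows "T 2 j k"
proof -
  have d: "distinct [1,2,k]" using assms by auto
  have g: "cycle_of_list [1,2,j] \<in> L" using base[OF assms(1)] unfolding T_def .
  have "T (cycle_of_list [1,2,j] 1) (cycle_of_list [1,2,j] 2) (cycle_of_list [1,2,j] k)"
    by (rule conjT[OF g d base[OF assms(2)]])
  moreover have "cycle_of_list [1,2,j] 1 = 2" "cycle_of_list [1,2,j] 2 = j" "cycle_of_list [1,2,j] k = k"
    using assms by (auto simp: transpose_def)
  ultimately show ?thesis by simp
qed

lemma iii: assumes "b \<in> {3..11}" "c \<in> {3..11}" "b \<noteq> c" shows "T 1 b c"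
proof -
  obtain x where x: "x \<in> {3..11}" "x \<noteq> b" "x \<noteq> c" using avoid2 by blast
  have g: "cycle_of_list [2,b,x] \<in> L" using ii[OF assms(1) x(1)] x(2) unfolding T_def by auto
  have d: "distinct [1,2,c]" using assms by auto
  have "T (cycle_of_list [2,b,x] 1) (cycle_of_list [2,b,x] 2) (cycle_of_list [2,b,x] c)"
    by (rule conjT[OF g d base[OF assms(2)]])
  moreover have "cycle_of_list [2,b,x] 1 = 1" "cycle_of_list [2,b,x] 2 = b" "cycle_of_list [2,b,x] c = c"
    using assms x by (auto simp: transpose_def)
  ultimately show ?thesis by simp
qed

lemma v: assumes "a \<in> {3..11}" "b \<in> {3..11}" "c \<in> {3..11}" "distinct [a,b,c]" shows "T a b c"
proof -
  obtain x where x: "x \<in> {3..11}" "x \<noteq> a" "x \<noteq> b" "x \<noteq> c" using avoid3 by blast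
  have g: "cycle_of_list [2,a,x] \<in> L" using ii[OF assms(1) x(1)] x(2) unfolding T_def by auto
  have d: "distinct [2,b,c]" using assms by auto
  have "T (cycle_of_list [2,a,x] 2) (cycle_of_list [2,a,x] b) (cycle_of_list [2,a,x] c)"
    by (rule conjT[OF g d ii[OF assms(2,3)]]) (use assms in auto)
  moreover have "cycle_of_list [2,a,x] 2 = a" "cycle_of_list [2,a,x] b = b" "cycle_of_list [2,a,x] c = c"
    using assms x by (auto simp: transpose_def)
  ultimately show ?thesis by simp
qed

lemma tri: "(x::nat) \<in> {1..11} \<Longrightarrow> x = 1 \<or> x = 2 \<or> x \<in> {3..11}" by auto

lemma one: assumes "b \<in> {1..11}" "c \<in> {1..11}" "distinct [1,b,c]" shows "T 1 b c"
proof -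
  have b: "b = 2 \<or> b \<in> {3..11}" using tri[OF assms(1)] assms(3) by auto
  have c: "c = 2 \<or> c \<in> {3..11}" using tri[OF assms(2)] assms(3) by auto
  show ?thesis
  proof (cases "b = 2")
    case True
    hence "c \<in> {3..11}" using c assms(3) by auto
    then show ?thesis using base True by simp
  next
    case False
    hence b3: "b \<in> {3..11}" using b by simp
    show ?thesis
    proof (cases "c = 2")
      case True then show ?thesis using i1[OF b3] by simp
    next
      case False
      hence "c \<in> {3..11}" using c by simp
      then show ?thesis using iii[OF b3] assms(3) by simp
    qed
  qed
qed

lemma all3: assumes "a \<in> {1..11}" "b \<in> {1..11}" "c \<in> {1..11}" "distinct [a,b,c]"
  shows "T a b c"
proof -
  have d1: "distinct [b,c,a]" "distinct [c,a,b]" using assms(4) by auto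
  have ta: "a = 1 \<or> a = 2 \<or> a \<in> {3..11}" using tri assms(1) by blast
  have tb: "b = 1 \<or> b = 2 \<or> b \<in> {3..11}" using tri assms(2) by blast
  have tc: "c = 1 \<or> c = 2 \<or> c \<in> {3..11}" using tri assms(3) by blast
  show ?thesis
  proof (cases "a = 1")
    case True then show ?thesis using one[OF assms(2,3)] assms(4) by simp
  next
    case na1: False
    show ?thesis
    proof (cases "b = 1")
      case True
      have "T 1 c a" using one[OF assms(3,1)] d1 True by simp
      hence "T c a 1" using rotT[of 1 c a] d1 True by simp
      then show ?thesis using rotT[of c a 1] d1 True by simp
    next
      case nb1: False
      show ?thesis
      proof (cases "c = 1")
        case True
        have "T 1 a b" using one[OF assms(1,2)] assms(4) True by simp
        then show ?thesis using rotT[of 1 a b] assms(4) True by simp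
      next
        case nc1: False
        have a': "a = 2 \<or> a \<in> {3..11}" using ta na1 by blast
        have b': "b = 2 \<or> b \<in> {3..11}" using tb nb1 by blast
        have c': "c = 2 \<or> c \<in> {3..11}" using tc nc1 by blast
        show ?thesis
        proof (cases "a = 2")
          case True
          hence "b \<in> {3..11}" "c \<in> {3..11}" "b \<noteq> c" using b' c' assms(4) by auto
          then show ?thesis using ii True by simp
        next
          case na2: False
          hence a3: "a \<in> {3..11}" using a' by simp
          show ?thesis
          proof (cases "b = 2")
            case True
            hence "c \<in> {3..11}" "c \<noteq> a" using c' assms(4) by auto
            hence "T 2 c a" using ii a3 by simp
            hence "T c a 2" using rotT[of 2 c a] d1 True by simp
            then show ?thesis using rotT[of c a 2] d1 True by simp
          next
            case nb2: False
            hence b3: "b \<in> {3..11}" using b' by simp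
            show ?thesis
            proof (cases "c = 2")
              case True
              have "T 2 a b" using ii[OF a3 b3] assms(4) by simp
              then show ?thesis using rotT[of 2 a b] assms(4) True by simp
            next
              case False
              hence "c \<in> {3..11}" using c' by simp
              then show ?thesis using v[OF a3 b3 _ assms(4)] by simp
            qed
          qed
        qed
      qed
    qed
  qed
qed

end

end



lemma gen_all:
  assumes sg: "subgroup L GG" and ccL: "cc \<in> L" and ddL: "dd \<in> L"
  shows "L = carrier GG"
proof -
  interpret LL L by (rule LL.intro[OF sg])
  have T123: "T 1 2 3" unfolding T_def using ddL dd_def by simp
  have b4: "T 1 2 4"
  proof -
    have g: "(dd \<circ> dd \<circ> cc) \<in> L" by (simp add: Lcomp ccL ddL)
    have "T ((dd \<circ> dd \<circ> cc) 1) ((dd \<circ> dd \<circ> cc) 2) ((dd \<circ> dd \<circ> cc) 3)" by (rule conjT[OF g _ T123]) simp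
    then show ?thesis by simp
  qed
  have b5: "T 1 2 5"
  proof -
    have g: "(dd \<circ> dd \<circ> cc \<circ> dd \<circ> dd \<circ> cc) \<in> L" by (simp add: Lcomp ccL ddL)
    have "T ((dd \<circ> dd \<circ> cc \<circ> dd \<circ> dd \<circ> cc) 1) ((dd \<circ> dd \<circ> cc \<circ> dd \<circ> dd \<circ> cc) 2) ((dd \<circ> dd \<circ> cc \<circ> dd \<circ> dd \<circ> cc) 3)" by (rule conjT[OF g _ T123]) simp
    then show ?thesis by simp
  qed
  have b6: "T 1 2 6"
  proof -
    have g: "(dd \<circ> dd \<circ> cc \<circ> dd \<circ> dd \<circ> cc \<circ> dd \<circ> dd \<circ> cc) \<in> L" by (simp add: Lcomp ccL ddL)
    have "T ((dd \<circ> dd \<circ> cc \<circ> dd \<circ> dd \<circ> cc \<circ> dd \<circ> dd \<circ> cc) 1) ((dd \<circ> dd \<circ> cc \<circ> dd \<circ> dd \<circ> cc \<circ> dd \<circ> dd \<circ> cc) 2) ((dd \<circ> dd \<circ> cc \<circ> dd \<circ> dd \<circ> cc \<circ> dd \<circ> dd \<circ> cc) 3)" by (rule conjT[OF g _ T123]) simp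
    then show ?thesis by simp
  qed
  have b7: "T 1 2 7"
  proof -
    have g: "(dd \<circ> dd \<circ> cc \<circ> dd \<circ> dd \<circ> cc \<circ> dd \<circ> dd \<circ> cc \<circ> dd \<circ> dd \<circ> cc) \<in> L" by (simp add: Lcomp ccL ddL)
    have "T ((dd \<circ> dd \<circ> cc \<circ> dd \<circ> dd \<circ> cc \<circ> dd \<circ> dd \<circ> cc \<circ> dd \<circ> dd \<circ> cc) 1) ((dd \<circ> dd \<circ> cc \<circ> dd \<circ> dd \<circ> cc \<circ> dd \<circ> dd \<circ> cc \<circ> dd \<circ> dd \<circ> cc) 2) ((dd \<circ> dd \<circ> cc \<circ> dd \<circ> dd \<circ> cc \<circ> dd \<circ> dd \<circ> cc \<circ> dd \<circ> dd \<circ> cc) 3)" by (rule conjT[OF g _ T123]) simp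
    then show ?thesis by simp
  qed
  have b8: "T 1 2 8"
  proof -
    have g: "(cc \<circ> cc \<circ> cc \<circ> cc \<circ> cc \<circ> dd \<circ> cc \<circ> dd \<circ> cc \<circ> cc \<circ> dd \<circ> cc \<circ> cc \<circ> dd) \<in> L" by (simp add: Lcomp ccL ddL)
    have "T ((cc \<circ> cc \<circ> cc \<circ> cc \<circ> cc \<circ> dd \<circ> cc \<circ> dd \<circ> cc \<circ> cc \<circ> dd \<circ> cc \<circ> cc \<circ> dd) 1) ((cc \<circ> cc \<circ> cc \<circ> cc \<circ> cc \<circ> dd \<circ> cc \<circ> dd \<circ> cc \<circ> cc \<circ> dd \<circ> cc \<circ> cc \<circ> dd) 2) ((cc \<circ> cc \<circ> cc \<circ> cc \<circ> cc \<circ> dd \<circ> cc \<circ> dd \<circ> cc \<circ> cc \<circ> dd \<circ> cc \<circ> cc \<circ> dd) 3)" by (rule conjT[OF g _ T123]) simp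
    then show ?thesis by simp
  qed
  have b9: "T 1 2 9"
  proof -
    have g: "(cc \<circ> cc \<circ> cc \<circ> cc \<circ> cc \<circ> cc \<circ> cc \<circ> cc \<circ> dd \<circ> cc \<circ> cc \<circ> dd) \<in> L" by (simp add: Lcomp ccL ddL)
    have "T ((cc \<circ> cc \<circ> cc \<circ> cc \<circ> cc \<circ> cc \<circ> cc \<circ> cc \<circ> dd \<circ> cc \<circ> cc \<circ> dd) 1) ((cc \<circ> cc \<circ> cc \<circ> cc \<circ> cc \<circ> cc \<circ> cc \<circ> cc \<circ> dd \<circ> cc \<circ> cc \<circ> dd) 2) ((cc \<circ> cc \<circ> cc \<circ> cc \<circ> cc \<circ> cc \<circ> cc \<circ> cc \<circ> dd \<circ> cc \<circ> cc \<circ> dd) 3)" by (rule conjT[OF g _ T123]) simp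
    then show ?thesis by simp
  qed
  have b10: "T 1 2 10"
  proof -
    have g: "(cc \<circ> cc \<circ> cc \<circ> cc \<circ> cc \<circ> cc \<circ> cc \<circ> dd \<circ> cc \<circ> dd \<circ> cc \<circ> cc \<circ> dd) \<in> L" by (simp add: Lcomp ccL ddL)
    have "T ((cc \<circ> cc \<circ> cc \<circ> cc \<circ> cc \<circ> cc \<circ> cc \<circ> dd \<circ> cc \<circ> dd \<circ> cc \<circ> cc \<circ> dd) 1) ((cc \<circ> cc \<circ> cc \<circ> cc \<circ> cc \<circ> cc \<circ> cc \<circ> dd \<circ> cc \<circ> dd \<circ> cc \<circ> cc \<circ> dd) 2) ((cc \<circ> cc \<circ> cc \<circ> cc \<circ> cc \<circ> cc \<circ> cc \<circ> dd \<circ> cc \<circ> dd \<circ> cc \<circ> cc \<circ> dd) 3)" by (rule conjT[OF g _ T123]) simp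
    then show ?thesis by simp
  qed
  have b11: "T 1 2 11"
  proof -
    have g: "(cc \<circ> cc \<circ> cc \<circ> cc \<circ> cc \<circ> cc \<circ> cc \<circ> cc \<circ> cc \<circ> cc \<circ> dd) \<in> L" by (simp add: Lcomp ccL ddL)
    have "T ((cc \<circ> cc \<circ> cc \<circ> cc \<circ> cc \<circ> cc \<circ> cc \<circ> cc \<circ> cc \<circ> cc \<circ> dd) 1) ((cc \<circ> cc \<circ> cc \<circ> cc \<circ> cc \<circ> cc \<circ> cc \<circ> cc \<circ> cc \<circ> cc \<circ> dd) 2) ((cc \<circ> cc \<circ> cc \<circ> cc \<circ> cc \<circ> cc \<circ> cc \<circ> cc \<circ> cc \<circ> cc \<circ> dd) 3)" by (rule conjT[OF g _ T123]) simp
    then show ?thesis by simp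
  qed

  have base: "T 1 2 k" if "k \<in> {3..11}" for k
  proof -
    have "k = 3 \<or> k = 4 \<or> k = 5 \<or> k = 6 \<or> k = 7 \<or> k = 8 \<or> k = 9 \<or> k = 10 \<or> k = 11"
      using that unfolding atLeastAtMost_iff by presburger
    then show ?thesis using T123 b4 b5 b6 b7 b8 b9 b10 b11 by auto
  qed
  have "three_cycles 11 \<subseteq> L"
  proof
    fix p assume "p \<in> three_cycles 11"
    then obtain cs where cs: "p = cycle_of_list cs" "cycle cs" "length cs = 3" "set cs \<subseteq> {1..11}"
      by auto
    obtain a b c where abc: "cs = [a,b,c]" using stupid_lemma[OF cs(3)] by auto
    have "T a b c" by (rule all3[OF base]) (use cs abc in auto)
    then show "p \<in> L" unfolding T_def using cs abc by simp
  qed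
  hence "generate GG (three_cycles 11) \<subseteq> L"
    using group.generate_subgroup_incl[OF GG_group _ sg] by blast
  hence "carrier GG \<subseteq> L" using alt_group_carrier_as_three_cycles by blast
  then show ?thesis using subgroup.subset[OF sg] by blast
qed


lemma funpow_out: "x \<notin> {1..11} \<Longrightarrow> (cc ^^ n) x = x"
  by (induction n) (simp_all add: cc_out)

lemma cc11: "cc ^^ 11 = id"
proof -
  have 11: "(11::nat) = Suc (Suc (Suc (Suc (Suc (Suc (Suc (Suc (Suc (Suc (Suc 0))))))))))" by simp
  have e: "cc ^^ 11 = cc \<circ> cc \<circ> cc \<circ> cc \<circ> cc \<circ> cc \<circ> cc \<circ> cc \<circ> cc \<circ> cc \<circ> cc"
    by (subst 11) (simp only: funpow.simps comp_id o_assoc)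
  show ?thesis
  proof
    fix x
    show "(cc ^^ 11) x = id x"
    proof (cases "x \<in> {1..11}")
      case False then show ?thesis using funpow_out by simp
    next
      case True
      hence "x = 1 \<or> x = 2 \<or> x = 3 \<or> x = 4 \<or> x = 5 \<or> x = 6 \<or> x = 7 \<or> x = 8 \<or> x = 9 \<or> x = 10 \<or> x = 11"
        unfolding atLeastAtMost_iff by presburger
      then show ?thesis unfolding e by auto
    qed
  qed
qed

lemma cc_pow_mod: "cc ^^ n = cc ^^ (n mod 11)"
proof -
  have 1: "cc ^^ (n mod 11 + 11 * (n div 11)) = cc ^^ (n mod 11) \<circ> (cc ^^ 11) ^^ (n div 11)"
    by (simp only: funpow_add funpow_mult)
  have "n mod 11 + 11 * (n div 11) = n" by simp
  then show ?thesis using 1 cc11 by simp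
qed

lemma cc_ne_id: "cc \<noteq> id"
proof assume "cc = id" hence "cc 1 = 1" by simp then show False by simp qed
lemma dd_ne_id: "dd \<noteq> id"
proof assume "dd = id" hence "dd 1 = 1" by simp then show False by simp qed

lemma dd3: "dd \<circ> dd \<circ> dd = id"
proof
  fix x show "(dd \<circ> dd \<circ> dd) x = id x"
  proof (cases "x \<in> {1,2,3}")
    case True then show ?thesis by auto
  next
    case False
    hence "dd x = x" unfolding dd_def by (intro id_outside_supp) auto
    then show ?thesis by simp
  qed
qed

definition "HC = generate GG {cc}"
definition "KD = generate GG {dd}"

lemma HC_sub: "HC \<subseteq> (\<lambda>k. cc ^^ k) ` {..<11}"
proof
  fix y assume "y \<in> HC"
  then show "y \<in> (\<lambda>k. cc ^^ k) ` {..<11}" unfolding HC_def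
  proof (induction rule: generate.induct)
    case one then show ?case by (force simp: GG_one intro: image_eqI[of _ _ 0])
  next
    case (incl h) then show ?case by (force intro: image_eqI[of _ _ 1])
  next
    case (inv h)
    hence h: "h = cc" by simp
    have "cc ^^ 10 \<circ> cc = id" using cc11 by (simp add: funpow_Suc_right[symmetric] numeral_eq_Suc del: funpow.simps)
    moreover have "cc \<circ> cc ^^ 10 = id" using cc11 by (simp add: numeral_eq_Suc del: funpow.simps) (simp add: funpow_swap1)
    ultimately have "inv' cc = cc ^^ 10" by (intro inv_unique_comp)
    then show ?case using h GG_inv[OF cc_carrier] by (force intro: image_eqI[of _ _ 10])
  next
    case (eng h1 h2)
    then obtain i j where "h1 = cc ^^ i" "h2 = cc ^^ j" by auto
    hence "h1 \<otimes>\<^bsub>GG\<^esub> h2 = cc ^^ ((i + j) mod 11)" using cc_pow_mod by (simp add: GG_mult funpow_add)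
    then show ?case by force
  qed
qed

lemma KD_sub: "KD \<subseteq> {id, dd, dd \<circ> dd}"
proof
  fix y assume "y \<in> KD"
  then show "y \<in> {id, dd, dd \<circ> dd}" unfolding KD_def
  proof (induction rule: generate.induct)
    case one then show ?case by (simp add: GG_one)
  next
    case (incl h) then show ?case by simp
  next
    case (inv h)
    hence h: "h = dd" by simp
    have "(dd \<circ> dd) \<circ> dd = id" "dd \<circ> (dd \<circ> dd) = id" using dd3 by (simp_all add: o_assoc)
    hence "inv' dd = dd \<circ> dd" by (intro inv_unique_comp)
    then show ?case using h GG_inv[OF dd_carrier] by simp
  next
    case (eng h1 h2)
    have d3: "dd (dd (dd a)) = a" for a using dd3 by (simp add: fun_eq_iff)
    from eng show ?case using d3 by (auto simp: GG_mult o_assoc fun_eq_iff)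
  qed
qed

lemma (in LL) Lpow: "y \<in> L \<Longrightarrow> y ^^ n \<in> L"
proof (induction n)
  case 0
  have "\<one>\<^bsub>GG\<^esub> \<in> L" by (rule subgroup.one_closed[OF sg])
  moreover have "y ^^ 0 = id" by simp
  ultimately show ?case by (metis GG_one)
next
  case (Suc n)
  have "y ^^ Suc n = (y ^^ n) \<circ> y" by (rule funpow_Suc_right)
  moreover have "(y ^^ n) \<circ> y \<in> L" by (rule Lcomp[OF Suc.IH[OF Suc.prems] Suc.prems])
  ultimately show ?case by (simp only:)
qed

lemma inv_mod11: "k \<in> {1..10} \<Longrightarrow> (k * k ^ 9) mod 11 = (1::nat)"
proof -
  assume "k \<in> {1..10}"
  hence "k = 1 \<or> k = 2 \<or> k = 3 \<or> k = 4 \<or> k = 5 \<or> k = 6 \<or> k = 7 \<or> k = 8 \<or> k = 9 \<or> k = 10"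
    unfolding atLeastAtMost_iff by presburger
  then show ?thesis by auto
qed

lemma HC_meet: assumes "subgroup L GG" "y \<in> HC" "y \<in> L" "y \<noteq> id" shows "cc \<in> L"
proof -
  interpret LL L by (rule LL.intro[OF assms(1)])
  obtain k where k: "k < 11" "y = cc ^^ k" using HC_sub assms(2) by auto
  have "k \<noteq> 0" using k assms(4) by auto
  hence kk: "k \<in> {1..10}" using k by auto
  have "y ^^ (k ^ 9) \<in> L" using Lpow assms(3) by blast
  moreover have "y ^^ (k ^ 9) = cc ^^ (k * k ^ 9)" using k by (simp add: funpow_mult)
  moreover have "cc ^^ (k * k ^ 9) = cc" using cc_pow_mod[of "k * k ^ 9"] inv_mod11[OF kk] by simp
  ultimately show ?thesis by simp
qed

lemma KD_meet: assumes "subgroup L GG" "y \<in> KD" "y \<in> L" "y \<noteq> id" shows "dd \<in> L"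
proof -
  interpret LL L by (rule LL.intro[OF assms(1)])
  have "y = dd \<or> y = dd \<circ> dd" using KD_sub assms(2,4) by auto
  moreover have "(dd \<circ> dd) \<circ> (dd \<circ> dd) = dd" using dd3 by (simp add: o_assoc fun_eq_iff)
  ultimately show ?thesis using Lcomp[OF assms(3) assms(3)] assms(3) by auto
qed

lemma HC_sg: "subgroup HC GG" unfolding HC_def
  by (rule group.generate_is_subgroup[OF GG_group]) (simp add: cc_carrier)
lemma KD_sg: "subgroup KD GG" unfolding KD_def
  by (rule group.generate_is_subgroup[OF GG_group]) (simp add: dd_carrier)

lemma cc_HC: "cc \<in> HC" unfolding HC_def by (rule generate.incl) simp
lemma dd_KD: "dd \<in> KD" unfolding KD_def by (rule generate.incl) simp

lemma HC_V: "HC \<in> VV"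
proof -
  have "card HC \<le> card ((\<lambda>k. cc ^^ k) ` {..<11})" by (rule card_mono[OF _ HC_sub]) simp
  also have "\<dots> \<le> 11" using card_image_le[of "{..<11::nat}" "\<lambda>k. cc ^^ k"] by simp
  finally have "card HC \<le> 11" .
  hence "HC \<noteq> carrier GG" using GG_card by auto
  moreover have "HC \<noteq> {id}" using cc_HC cc_ne_id by auto
  ultimately show ?thesis unfolding VV_iff using HC_sg by simp
qed

lemma KD_V: "KD \<in> VV"
proof -
  have "card KD \<le> card {id, dd, dd \<circ> dd}" by (rule card_mono[OF _ KD_sub]) simp
  also have "\<dots> \<le> 3" by (rule card_insert_le_m1) (auto intro: card_insert_le_m1)
  finally have "card KD \<le> 3" .
  hence "KD \<noteq> carrier GG" using GG_card by auto
  moreover have "KD \<noteq> {id}" using dd_KD dd_ne_id by auto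
  ultimately show ?thesis unfolding VV_iff using KD_sg by simp
qed

lemma nonid_meet: "A \<inter> B \<noteq> {id} \<Longrightarrow> id \<in> A \<Longrightarrow> id \<in> B \<Longrightarrow> \<exists>y. y \<in> A \<and> y \<in> B \<and> y \<noteq> id"
  by blast

lemma id_in: "X \<in> VV \<Longrightarrow> id \<in> X"
  using subgroup.one_closed GG_one unfolding VV_iff by metis

lemma lower: "3 \<le> graph_dist VV EE HC KD"
proof (rule dist_ge3)
  have HCp: "HC \<noteq> carrier GG" and KDp: "KD \<noteq> carrier GG" using HC_V KD_V unfolding VV_iff by auto
  show "HC \<noteq> KD"
  proof
    assume "HC = KD"
    hence "cc \<in> {id, dd, dd \<circ> dd}" using cc_HC KD_sub by auto
    moreover have "cc 4 \<noteq> id 4" "cc 4 \<noteq> dd 4" "cc 4 \<noteq> (dd \<circ> dd) 4" by simp_all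
    ultimately show False by (metis empty_iff insert_iff)
  qed
  show "\<not> EE HC KD"
  proof
    assume "EE HC KD"
    hence "HC \<inter> KD \<noteq> {id}" unfolding intersection_graph_adj_def by (simp add: GG_one)
    then obtain y where y: "y \<in> HC" "y \<in> KD" "y \<noteq> id" using nonid_meet id_in[OF HC_V] id_in[OF KD_V] by blast
    have "dd \<in> HC" by (rule KD_meet[OF HC_sg y(2,1,3)])
    hence "HC = carrier GG" using gen_all[OF HC_sg cc_HC] by simp
    then show False using HCp by simp
  qed
  fix L assume L: "L \<in> VV" "EE HC L" "EE L KD"
  have Lsg: "subgroup L GG" using L(1) unfolding VV_iff by simp
  have "HC \<inter> L \<noteq> {id}" "L \<inter> KD \<noteq> {id}" using L(2,3) unfolding intersection_graph_adj_def by (simp_all add: GG_one)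
  then obtain y z where y: "y \<in> HC" "y \<in> L" "y \<noteq> id" and z: "z \<in> L" "z \<in> KD" "z \<noteq> id"
    using nonid_meet id_in[OF HC_V] id_in[OF KD_V] id_in[OF L(1)] by metis
  have "cc \<in> L" by (rule HC_meet[OF Lsg y])
  moreover have "dd \<in> L" by (rule KD_meet[OF Lsg z(2,1,3)])
  ultimately have "L = carrier GG" using gen_all[OF Lsg] by simp
  then show False using L(1) unfolding VV_iff by simp
qed

theorem mainTheorem6:
  shows "graph_diameter (intersection_graph_vertices (alt_group 11))
           (intersection_graph_adj (alt_group 11)) = 3"
  by (rule diameter3[OF upper HC_V KD_V lower])


end
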